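(* Let a countable group $G$ act on a set $X$, let $\Phi=(\ell,\phi,\mathcal{Z},\Gamma,\mathcal{H})$ be a chart for $G$, let $0<\epsilon<1/16$, let $q$ satisfy $6\epsilon<q<1/2$, and let $A\subseteq\mathbb{Z}^\ell\times\Gamma$ be a centered rectangle. Suppose $E$ is a $(\Phi,A,\epsilon)$-sub-rectangular equivalence relation on $X$. Let $x\in X^{\mathcal{H}}$ and $1\le i\le\ell$. If $y_1,\dots,y_t\in\partial_i^\Phi(E,q\cdot A)\cap\phi(2^{17\ell}\cdot A)\cdot x$ satisfy $$\phi\big(2^{19\ell}\cdot A^i+5q\cdot A\big)\cdot y_r\cap\phi\big(2^{19\ell}\cdot A^i+5q\cdot A\big)\cdot y_s=\varnothing$$ for all $r\ne s$, then $t\le 2^{22\ell^2}$.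
   Context: Rectangles: Let $\Gamma$ be a finite additive abelian group with identity $0_\Gamma$ and $\ell\in\mathbb{N}$. Elements $v$ of $\mathbb{R}^\ell\times\Gamma$ have coordinates $v_1,\dots,v_\ell\in\mathbb{R}$, $v_{\ell+1}\in\Gamma$; $\mathbf{0}$ has first $\ell$ coordinates $0$, last $0_\Gamma$; $e_i$ has $i$-th coordinate $1$, other real coordinates $0$, last $0_\Gamma$; $\lambda\cdot v=(\lambda v_1,\dots,\lambda v_\ell,v_{\ell+1})$. $\mathrm{Rec}(a)=\{b\in\mathbb{Z}^\ell\times\Gamma: -|a_i|\le b_i\le|a_i|,\ 1\le i\le\ell\}$. A rectangle is $c+\mathrm{Rec}(a)$ with $c,a\in\mathbb{Z}^\ell\times\Gamma$; uniquely written with center $c\in\mathbb{Z}^\ell\times\{0_\Gamma\}$ and radius vector $\mathrm{L}(A)=a\in\mathbb{N}^\ell\times\{0_\Gamma\}$, entries $\mathrm{L}_i(A)$. Centered means center $\mathbf{0}$. $A\sqsubseteq B$ means $\mathrm{L}_i(A)\le\mathrm{L}_i(B)$ for all $i$. For $\lambda>0$, $\lambda\cdot A=c+\mathrm{Rec}(\lambda\cdot\mathrm{L}(A))$ ($c$ the center of $A$). $A^i=c+\mathrm{Rec}(\mathrm{L}(A)-\mathrm{L}_i(A)\cdot e_i)$, and $\lambda\cdot A^i$ means $\lambda\cdot(A^i)$. Sums are elementwise. Charts: a chart for $G$ is $\Phi=(\ell,\phi,\mathcal{Z},\Gamma,\mathcal{H})$ with $\mathcal{H}$ a finite collection of pairwise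 conjugate subgroups of $G$, $\Gamma$ finite abelian, $\mathcal{Z}$ a centered rectangle with all $\mathrm{L}_i(\mathcal{Z})>0$, $\phi$ an injective map into $G$ with $\mathrm{dom}(\phi)$ a centered rectangle containing $3\cdot\mathcal{Z}$, $\phi(\mathbf{0})=1_G$, and for all $r,s\in\mathrm{dom}(\phi)$, $H\in\mathcal{H}$: $\phi(r)H=\phi(s)H\Rightarrow r=s$; $r+s+\mathcal{Z}\subseteq\mathrm{dom}(\phi)\Rightarrow\exists z\in\mathcal{Z}:\phi(r)\phi(s)H=\phi(r+s+z)H$; $r-s+\mathcal{Z}\subseteq\mathrm{dom}(\phi)\Rightarrow\exists z:\phi(r)\phi(s)^{-1}H=\phi(r-s+z)H$; $-r+s+\mathcal{Z}\subseteq\mathrm{dom}(\phi)\Rightarrow\exists z:\phi(r)^{-1}\phi(s)H=\phi(-r+s+z)H$; $-s+\mathcal{Z}\subseteq\mathrm{dom}(\phi)\Rightarrow\exists z:\phi(s)^{-1}H=\phi(-s+z)H$. $\phi(S)\cdot x=\{\phi(s)\cdot x:s\in S\}$; $X^{\mathcal{H}}=\{x\in X:\mathrm{Stab}(x)\in\mathcal{H}\}$. Rough rectangles: for a rectangle $B$ with $2\cdot B\subseteq\mathrm{dom}(\phi)$, $x\in X^{\mathcal{H}}$, $0<\delta<1$, $R\subseteq X$ is $(\Phi,\delta)$-roughly $B$ at $x$ if $2\cdot\mathcal{Z}\sqsubseteq\delta\cdot B$ and $\phi((1-\delta)\cdot B)\cdot x\subseteq R\subseteq\phi((1+\delta)\cdot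 B)\cdot x$. Rectangular: for $A$ centered and $0<\epsilon<1$, an equivalence relation $F$ is $(\Phi,A,\epsilon)$-rectangular if every $F$-class not meeting $X^{\mathcal{H}}$ is a singleton and every $F$-class $U$ meeting $X^{\mathcal{H}}$ is $(\Phi,\delta)$-roughly $B$ at some point of $X^{\mathcal{H}}$ for some $\delta>0$ and rectangle $B$ with $A\sqsubseteq B$, $2^{22\ell}\cdot B\subseteq\mathrm{dom}(\phi)$, $2\delta\cdot B\sqsubseteq\epsilon\cdot A$. $E$ is $(\Phi,A,\epsilon)$-sub-rectangular if it contains a $(\Phi,A,\epsilon)$-rectangular sub-equivalence relation. Boundary: for $A'\subseteq\mathrm{dom}(\phi)$ centered and $1\le i\le\ell$, $\partial_i^\Phi(E,A')$ is the set of $x\in X^{\mathcal{H}}$ with $[\phi(A'^i-\mathrm{L}_i(A')\cdot e_i)\cdot x]_E\cap[\phi(A'^i+\mathrm{L}_i(A')\cdot e_i)\cdot x]_E=\varnothing$, $[Y]_E$ denoting $E$-saturation. *)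

theory Defs
  imports "HOL-Algebra.Group_Action" "HOL-Algebra.Coset" "HOL-Library.Countable_Set" Complex_Main
begin

(* Points of Z^l x Gamma: the integer coordinates are  fst v 1, ..., fst v l
   (all other integer coordinates are required to be 0), the Gamma coordinate is  snd v. *)
type_synonym 'c pt = "(nat \<Rightarrow> int) \<times> 'c"

definition valid_pt :: "nat \<Rightarrow> 'c pt \<Rightarrow> bool" where
  "valid_pt l v \<longleftrightarrow> (\<forall>j. j \<notin> {1..l} \<longrightarrow> fst v j = 0)"

definition padd :: "'c::ab_group_add pt \<Rightarrow> 'c pt \<Rightarrow> 'c pt" where
  "padd v w = ((\<lambda>j. fst v j + fst w j), snd v + snd w)"

definition pminus :: "'c::ab_group_add pt \<Rightarrow> 'c pt \<Rightarrow> 'c pt" where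
  "pminus v w = ((\<lambda>j. fst v j - fst w j), snd v - snd w)"

definition pneg :: "'c::ab_group_add pt \<Rightarrow> 'c pt" where
  "pneg v = ((\<lambda>j. - fst v j), - snd v)"

definition pzero :: "'c::ab_group_add pt" where
  "pzero = ((\<lambda>j. 0), 0)"

definition pe :: "nat \<Rightarrow> int \<Rightarrow> 'c::ab_group_add pt" where
  "pe i k = ((\<lambda>j. if j = i then k else 0), 0)"

definition Rec :: "nat \<Rightarrow> (nat \<Rightarrow> real) \<Rightarrow> 'c::ab_group_add pt set" where
  "Rec l a = {b. valid_pt l b \<and> (\<forall>i\<in>{1..l}. \<bar>real_of_int (fst b i)\<bar> \<le> \<bar>a i\<bar>)}"

definition ptrans :: "'c::ab_group_add pt \<Rightarrow> 'c pt set \<Rightarrow> 'c pt set" where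
  "ptrans v S = padd v ` S"

definition psum :: "'c::ab_group_add pt set \<Rightarrow> 'c pt set \<Rightarrow> 'c pt set" where
  "psum S T = {padd s t | s t. s \<in> S \<and> t \<in> T}"

(* A rectangle is given by its center c (in Z^l x {0}) and its radius vector L (in N^l x {0}). *)
type_synonym rect = "(nat \<Rightarrow> int) \<times> (nat \<Rightarrow> nat)"

definition is_rect :: "nat \<Rightarrow> rect \<Rightarrow> bool" where
  "is_rect l R \<longleftrightarrow> (\<forall>j. j \<notin> {1..l} \<longrightarrow> fst R j = 0)"

definition centered :: "(nat \<Rightarrow> nat) \<Rightarrow> rect" where
  "centered a = ((\<lambda>j. 0), a)"

definition rset :: "nat \<Rightarrow> rect \<Rightarrow> 'c::ab_group_add pt set" where
  "rset l R = ptrans (fst R, 0) (Rec l (\<lambda>i. real (snd R i)))"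

(* lambda . R = c + Rec(lambda L(R)); as a rectangle its radius vector is floor(lambda L(R)) *)
definition rscale :: "real \<Rightarrow> rect \<Rightarrow> rect" where
  "rscale lam R = (fst R, (\<lambda>i. nat \<lfloor>lam * real (snd R i)\<rfloor>))"

definition rdrop :: "nat \<Rightarrow> rect \<Rightarrow> rect" where
  "rdrop i R = (fst R, (snd R)(i := 0))"

definition rle :: "nat \<Rightarrow> rect \<Rightarrow> rect \<Rightarrow> bool" where
  "rle l A B \<longleftrightarrow> (\<forall>i\<in>{1..l}. snd A i \<le> snd B i)"

definition act_img :: "('g \<Rightarrow> 'x \<Rightarrow> 'x) \<Rightarrow> ('c pt \<Rightarrow> 'g) \<Rightarrow> 'c pt set \<Rightarrow> 'x \<Rightarrow> 'x set" where
  "act_img act \<phi> S x = (\<lambda>s. act (\<phi> s) x) ` S"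

(* Charts Phi = (l, phi, Z, Gamma, H): Gamma is the type 'c, dom(phi) = rset l (centered D),
   Z = centered Zr. *)
definition chart ::
  "('g, 'b) monoid_scheme \<Rightarrow> nat \<Rightarrow> ('c::{finite, ab_group_add} pt \<Rightarrow> 'g)
     \<Rightarrow> (nat \<Rightarrow> nat) \<Rightarrow> (nat \<Rightarrow> nat) \<Rightarrow> 'g set set \<Rightarrow> bool" where
  "chart G l \<phi> D Zr \<H> \<longleftrightarrow>
     (let dom = (rset l (centered D) :: 'c pt set); Z = (rset l (centered Zr) :: 'c pt set) in
       finite \<H> \<and> (\<forall>H\<in>\<H>. subgroup H G) \<and>
       (\<forall>H1\<in>\<H>. \<forall>H2\<in>\<H>. \<exists>g\<in>carrier G. H2 = (g <#\<^bsub>G\<^esub> H1) #>\<^bsub>G\<^esub> inv\<^bsub>G\<^esub> g) \<and>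
       (\<forall>i\<in>{1..l}. Zr i > 0) \<and>
       rset l (rscale 3 (centered Zr)) \<subseteq> dom \<and>
       \<phi> ` dom \<subseteq> carrier G \<and> inj_on \<phi> dom \<and> \<phi> pzero = \<one>\<^bsub>G\<^esub> \<and>
       (\<forall>r\<in>dom. \<forall>s\<in>dom. \<forall>H\<in>\<H>.
          (\<phi> r <#\<^bsub>G\<^esub> H = \<phi> s <#\<^bsub>G\<^esub> H \<longrightarrow> r = s) \<and>
          (ptrans (padd r s) Z \<subseteq> dom \<longrightarrow>
             (\<exists>z\<in>Z. (\<phi> r \<otimes>\<^bsub>G\<^esub> \<phi> s) <#\<^bsub>G\<^esub> H = \<phi> (padd (padd r s) z) <#\<^bsub>G\<^esub> H)) \<and>
          (ptrans (pminus r s) Z \<subseteq> dom \<longrightarrow>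
             (\<exists>z\<in>Z. (\<phi> r \<otimes>\<^bsub>G\<^esub> inv\<^bsub>G\<^esub> \<phi> s) <#\<^bsub>G\<^esub> H = \<phi> (padd (pminus r s) z) <#\<^bsub>G\<^esub> H)) \<and>
          (ptrans (padd (pneg r) s) Z \<subseteq> dom \<longrightarrow>
             (\<exists>z\<in>Z. (inv\<^bsub>G\<^esub> \<phi> r \<otimes>\<^bsub>G\<^esub> \<phi> s) <#\<^bsub>G\<^esub> H = \<phi> (padd (padd (pneg r) s) z) <#\<^bsub>G\<^esub> H)) \<and>
          (ptrans (pneg s) Z \<subseteq> dom \<longrightarrow>
             (\<exists>z\<in>Z. inv\<^bsub>G\<^esub> \<phi> s <#\<^bsub>G\<^esub> H = \<phi> (padd (pneg s) z) <#\<^bsub>G\<^esub> H))))"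

definition XH :: "('g, 'b) monoid_scheme \<Rightarrow> ('g \<Rightarrow> 'x \<Rightarrow> 'x) \<Rightarrow> 'x set \<Rightarrow> 'g set set \<Rightarrow> 'x set" where
  "XH G act X \<H> = {x\<in>X. stabilizer G act x \<in> \<H>}"

definition roughly ::
  "('g, 'b) monoid_scheme \<Rightarrow> ('g \<Rightarrow> 'x \<Rightarrow> 'x) \<Rightarrow> 'x set \<Rightarrow> nat \<Rightarrow> ('c::{finite, ab_group_add} pt \<Rightarrow> 'g)
     \<Rightarrow> (nat \<Rightarrow> nat) \<Rightarrow> (nat \<Rightarrow> nat) \<Rightarrow> 'g set set \<Rightarrow> real \<Rightarrow> rect \<Rightarrow> 'x \<Rightarrow> 'x set \<Rightarrow> bool" where
  "roughly G act X l \<phi> D Zr \<H> \<delta> B x R \<longleftrightarrow>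
     is_rect l B \<and> (rset l (rscale 2 B) :: 'c pt set) \<subseteq> rset l (centered D) \<and>
     x \<in> XH G act X \<H> \<and> 0 < \<delta> \<and> \<delta> < 1 \<and>
     rle l (rscale 2 (centered Zr)) (rscale \<delta> B) \<and>
     act_img act \<phi> (rset l (rscale (1 - \<delta>) B)) x \<subseteq> R \<and>
     R \<subseteq> act_img act \<phi> (rset l (rscale (1 + \<delta>) B)) x"

(* F is (Phi, A, eps)-rectangular, A = centered a *)
definition rectangular ::
  "('g, 'b) monoid_scheme \<Rightarrow> ('g \<Rightarrow> 'x \<Rightarrow> 'x) \<Rightarrow> 'x set \<Rightarrow> nat \<Rightarrow> ('c::{finite, ab_group_add} pt \<Rightarrow> 'g)
     \<Rightarrow> (nat \<Rightarrow> nat) \<Rightarrow> (nat \<Rightarrow> nat) \<Rightarrow> 'g set set \<Rightarrow> (nat \<Rightarrow> nat) \<Rightarrow> real \<Rightarrow> 'x rel \<Rightarrow> bool" where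
  "rectangular G act X l \<phi> D Zr \<H> a \<epsilon> F \<longleftrightarrow>
     equiv X F \<and>
     (\<forall>U\<in>X // F. U \<inter> XH G act X \<H> = {} \<longrightarrow> (\<exists>u. U = {u})) \<and>
     (\<forall>U\<in>X // F. U \<inter> XH G act X \<H> \<noteq> {} \<longrightarrow>
        (\<exists>\<delta> B y. \<delta> > 0 \<and> is_rect l B \<and> y \<in> XH G act X \<H> \<and>
           roughly G act X l \<phi> D Zr \<H> \<delta> B y U \<and>
           rle l (centered a) B \<and>
           (rset l (rscale (2 ^ (22 * l)) B) :: 'c pt set) \<subseteq> rset l (centered D) \<and>
           rle l (rscale (2 * \<delta>) B) (rscale \<epsilon> (centered a))))"

definition sub_rectangular ::
  "('g, 'b) monoid_scheme \<Rightarrow> ('g \<Rightarrow> 'x \<Rightarrow> 'x) \<Rightarrow> 'x set \<Rightarrow> nat \<Rightarrow> ('c::{finite, ab_group_add} pt \<Rightarrow> 'g)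
     \<Rightarrow> (nat \<Rightarrow> nat) \<Rightarrow> (nat \<Rightarrow> nat) \<Rightarrow> 'g set set \<Rightarrow> (nat \<Rightarrow> nat) \<Rightarrow> real \<Rightarrow> 'x rel \<Rightarrow> bool" where
  "sub_rectangular G act X l \<phi> D Zr \<H> a \<epsilon> E \<longleftrightarrow>
     (\<exists>F \<subseteq> E. rectangular G act X l \<phi> D Zr \<H> a \<epsilon> F)"

definition boundary ::
  "('g, 'b) monoid_scheme \<Rightarrow> ('g \<Rightarrow> 'x \<Rightarrow> 'x) \<Rightarrow> 'x set \<Rightarrow> nat \<Rightarrow> ('c::{finite, ab_group_add} pt \<Rightarrow> 'g)
     \<Rightarrow> 'g set set \<Rightarrow> 'x rel \<Rightarrow> rect \<Rightarrow> nat \<Rightarrow> 'x set" where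
  "boundary G act X l \<phi> \<H> E A' i =
     {x \<in> XH G act X \<H>.
        E `` act_img act \<phi> (ptrans (pe i (- int (snd A' i))) (rset l (rdrop i A') :: 'c pt set)) x
        \<inter> E `` act_img act \<phi> (ptrans (pe i (int (snd A' i))) (rset l (rdrop i A'))) x = {}}"

end

theory Submission
  imports Defs
begin

lemma valid_padd[simp]: "valid_pt l v \<Longrightarrow> valid_pt l w \<Longrightarrow> valid_pt l (padd v w)"
  by (simp add: valid_pt_def padd_def)
lemma valid_pminus[simp]: "valid_pt l v \<Longrightarrow> valid_pt l w \<Longrightarrow> valid_pt l (pminus v w)"
  by (simp add: valid_pt_def pminus_def)
lemma valid_pneg[simp]: "valid_pt l v \<Longrightarrow> valid_pt l (pneg v)"
  by (simp add: valid_pt_def pneg_def)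
lemma valid_pe[simp]: "i \<in> {1..l} \<Longrightarrow> valid_pt l (pe i k)"
  by (auto simp add: valid_pt_def pe_def)
lemma valid_pzero[simp]: "valid_pt l pzero"
  by (simp add: valid_pt_def pzero_def)

lemma fst_padd[simp]: "fst (padd v w) j = fst v j + fst w j" by (simp add: padd_def)
lemma fst_pminus[simp]: "fst (pminus v w) j = fst v j - fst w j" by (simp add: pminus_def)
lemma fst_pneg[simp]: "fst (pneg v) j = - fst v j" by (simp add: pneg_def)
lemma fst_pe[simp]: "fst (pe i k) j = (if j = i then k else 0)" by (simp add: pe_def)

lemma mem_rset:
  assumes "is_rect l R"
  shows "(w \<in> (rset l R :: 'c::ab_group_add pt set)) \<longleftrightarrow>
    valid_pt l w \<and> (\<forall>j\<in>{1..l}. \<bar>fst w j - fst R j\<bar> \<le> int (snd R j))"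
proof
  assume "w \<in> rset l R"
  then obtain v where v: "v \<in> Rec l (\<lambda>i. real (snd R i))" "w = padd (fst R, 0) v"
    unfolding rset_def ptrans_def by auto
  have "\<bar>fst w j - fst R j\<bar> \<le> int (snd R j)" if "j \<in> {1..l}" for j
  proof -
    have "\<bar>real_of_int (fst v j)\<bar> \<le> \<bar>real (snd R j)\<bar>" using v(1) that unfolding Rec_def by auto
    hence "\<bar>fst v j\<bar> \<le> int (snd R j)" by linarith
    thus ?thesis using v(2) by simp
  qed
  moreover have "valid_pt l w" using v assms unfolding Rec_def is_rect_def valid_pt_def by auto
  ultimately show "valid_pt l w \<and> (\<forall>j\<in>{1..l}. \<bar>fst w j - fst R j\<bar> \<le> int (snd R j))" by auto
next
  assume h: "valid_pt l w \<and> (\<forall>j\<in>{1..l}. \<bar>fst w j - fst R j\<bar> \<le> int (snd R j))"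
  define v where "v = pminus w (fst R, 0)"
  have "w = padd (fst R, 0) v" unfolding v_def padd_def pminus_def by auto
  moreover have "v \<in> Rec l (\<lambda>i. real (snd R i))"
  proof -
    have "valid_pt l v" using h assms unfolding v_def is_rect_def valid_pt_def pminus_def by auto
    moreover have "\<bar>real_of_int (fst v j)\<bar> \<le> \<bar>real (snd R j)\<bar>" if "j \<in> {1..l}" for j
    proof -
      have "\<bar>fst v j\<bar> \<le> int (snd R j)" using h that unfolding v_def by simp
      thus ?thesis by linarith
    qed
    ultimately show ?thesis unfolding Rec_def by auto
  qed
  ultimately show "w \<in> rset l R" unfolding rset_def ptrans_def by auto
qed

lemma is_rect_centered[simp]: "is_rect l (centered a)" by (simp add: is_rect_def centered_def)
lemma fst_centered[simp]: "fst (centered a) = (\<lambda>j. 0)" by (simp add: centered_def)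
lemma snd_centered[simp]: "snd (centered a) = a" by (simp add: centered_def)
lemma fst_rscale[simp]: "fst (rscale lam R) = fst R" by (simp add: rscale_def)
lemma snd_rscale[simp]: "snd (rscale lam R) j = nat \<lfloor>lam * real (snd R j)\<rfloor>" by (simp add: rscale_def)
lemma fst_rdrop[simp]: "fst (rdrop i R) = fst R" by (simp add: rdrop_def)
lemma snd_rdrop[simp]: "snd (rdrop i R) = (snd R)(i := 0)" by (simp add: rdrop_def)
lemma is_rect_rscale[simp]: "is_rect l (rscale lam R) = is_rect l R" by (simp add: is_rect_def)
lemma is_rect_rdrop[simp]: "is_rect l (rdrop i R) = is_rect l R" by (simp add: is_rect_def)

lemma mem_rset_c:
  "(w \<in> (rset l (centered a) :: 'c::ab_group_add pt set)) \<longleftrightarrow>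
    valid_pt l w \<and> (\<forall>j\<in>{1..l}. \<bar>fst w j\<bar> \<le> int (a j))"
  by (simp add: mem_rset)

lemma ptrans_sub:
  assumes "valid_pt l v" "\<forall>j\<in>{1..l}. \<bar>fst v j\<bar> + int (Zr j) \<le> int (D j)"
  shows "ptrans v (rset l (centered Zr)) \<subseteq> (rset l (centered D) :: 'c::ab_group_add pt set)"
proof
  fix w assume "w \<in> ptrans v (rset l (centered Zr) :: 'c pt set)"
  then obtain z where z: "z \<in> (rset l (centered Zr) :: 'c pt set)" "w = padd v z" unfolding ptrans_def by auto
  show "w \<in> rset l (centered D)" using z assms by (force simp add: mem_rset_c)
qed

lemma rset_sub_bound:
  assumes "is_rect l R" "rset l R \<subseteq> (rset l (centered D) :: 'c::ab_group_add pt set)" "j \<in> {1..l}"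
  shows "\<bar>fst R j\<bar> + int (snd R j) \<le> int (D j)"
proof -
  define w :: "'c pt" where "w = ((\<lambda>k. if k = j then fst R j + (if fst R j \<ge> 0 then int (snd R j) else - int (snd R j)) else fst R k), 0)"
  have "valid_pt l w" using assms unfolding w_def valid_pt_def is_rect_def by auto
  moreover have "\<forall>k\<in>{1..l}. \<bar>fst w k - fst R k\<bar> \<le> int (snd R k)"
    unfolding w_def by auto
  ultimately have "w \<in> rset l R" using assms by (simp add: mem_rset)
  hence "w \<in> rset l (centered D)" using assms by auto
  hence "\<bar>fst w j\<bar> \<le> int (D j)" using assms(3) by (simp add: mem_rset_c)
  moreover have "\<bar>fst w j\<bar> = \<bar>fst R j\<bar> + int (snd R j)"
    unfolding w_def by auto
  ultimately show ?thesis by simp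
qed

locale ctx =
  fixes G :: "('g,'b) monoid_scheme" and act :: "'g \<Rightarrow> 'x \<Rightarrow> 'x" and X :: "'x set"
    and l :: nat and \<phi> :: "'c::{finite,ab_group_add} pt \<Rightarrow> 'g" and D Zr :: "nat \<Rightarrow> nat"
    and HH :: "'g set set"
  assumes ga: "group_action G X act" and ch: "chart G l \<phi> D Zr HH"
begin

abbreviation "dm \<equiv> (rset l (centered D) :: 'c pt set)"
abbreviation "Zs \<equiv> (rset l (centered Zr) :: 'c pt set)"

lemma grp: "group G" using ga unfolding group_action_def group_hom_def by auto

lemma chU: "finite HH \<and> (\<forall>H\<in>HH. subgroup H G) \<and>
       (\<forall>H1\<in>HH. \<forall>H2\<in>HH. \<exists>g\<in>carrier G. H2 = (g <#\<^bsub>G\<^esub> H1) #>\<^bsub>G\<^esub> inv\<^bsub>G\<^esub> g) \<and>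
       (\<forall>i\<in>{1..l}. Zr i > 0) \<and>
       rset l (rscale 3 (centered Zr)) \<subseteq> dm \<and>
       \<phi> ` dm \<subseteq> carrier G \<and> inj_on \<phi> dm \<and> \<phi> pzero = \<one>\<^bsub>G\<^esub> \<and>
       (\<forall>r\<in>dm. \<forall>s\<in>dm. \<forall>H\<in>HH.
          (\<phi> r <#\<^bsub>G\<^esub> H = \<phi> s <#\<^bsub>G\<^esub> H \<longrightarrow> r = s) \<and>
          (ptrans (padd r s) Zs \<subseteq> dm \<longrightarrow>
             (\<exists>z\<in>Zs. (\<phi> r \<otimes>\<^bsub>G\<^esub> \<phi> s) <#\<^bsub>G\<^esub> H = \<phi> (padd (padd r s) z) <#\<^bsub>G\<^esub> H)) \<and>
          (ptrans (pminus r s) Zs \<subseteq> dm \<longrightarrow>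
             (\<exists>z\<in>Zs. (\<phi> r \<otimes>\<^bsub>G\<^esub> inv\<^bsub>G\<^esub> \<phi> s) <#\<^bsub>G\<^esub> H = \<phi> (padd (pminus r s) z) <#\<^bsub>G\<^esub> H)) \<and>
          (ptrans (padd (pneg r) s) Zs \<subseteq> dm \<longrightarrow>
             (\<exists>z\<in>Zs. (inv\<^bsub>G\<^esub> \<phi> r \<otimes>\<^bsub>G\<^esub> \<phi> s) <#\<^bsub>G\<^esub> H = \<phi> (padd (padd (pneg r) s) z) <#\<^bsub>G\<^esub> H)) \<and>
          (ptrans (pneg s) Zs \<subseteq> dm \<longrightarrow>
             (\<exists>z\<in>Zs. inv\<^bsub>G\<^esub> \<phi> s <#\<^bsub>G\<^esub> H = \<phi> (padd (pneg s) z) <#\<^bsub>G\<^esub> H)))"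
  using ch unfolding chart_def Let_def .

lemma chBig: "r \<in> dm \<Longrightarrow> s \<in> dm \<Longrightarrow> H \<in> HH \<Longrightarrow>
          (\<phi> r <#\<^bsub>G\<^esub> H = \<phi> s <#\<^bsub>G\<^esub> H \<longrightarrow> r = s) \<and>
          (ptrans (padd r s) Zs \<subseteq> dm \<longrightarrow>
             (\<exists>z\<in>Zs. (\<phi> r \<otimes>\<^bsub>G\<^esub> \<phi> s) <#\<^bsub>G\<^esub> H = \<phi> (padd (padd r s) z) <#\<^bsub>G\<^esub> H)) \<and>
          (ptrans (pminus r s) Zs \<subseteq> dm \<longrightarrow>
             (\<exists>z\<in>Zs. (\<phi> r \<otimes>\<^bsub>G\<^esub> inv\<^bsub>G\<^esub> \<phi> s) <#\<^bsub>G\<^esub> H = \<phi> (padd (pminus r s) z) <#\<^bsub>G\<^esub> H)) \<and>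
          (ptrans (padd (pneg r) s) Zs \<subseteq> dm \<longrightarrow>
             (\<exists>z\<in>Zs. (inv\<^bsub>G\<^esub> \<phi> r \<otimes>\<^bsub>G\<^esub> \<phi> s) <#\<^bsub>G\<^esub> H = \<phi> (padd (padd (pneg r) s) z) <#\<^bsub>G\<^esub> H)) \<and>
          (ptrans (pneg s) Zs \<subseteq> dm \<longrightarrow>
             (\<exists>z\<in>Zs. inv\<^bsub>G\<^esub> \<phi> s <#\<^bsub>G\<^esub> H = \<phi> (padd (pneg s) z) <#\<^bsub>G\<^esub> H))"
  using chU[THEN conjunct2, THEN conjunct2, THEN conjunct2, THEN conjunct2, THEN conjunct2,
    THEN conjunct2, THEN conjunct2, THEN conjunct2] by blast

lemma chartD:
  "\<phi> ` dm \<subseteq> carrier G" "\<phi> pzero = \<one>\<^bsub>G\<^esub>"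
  "\<And>j. j \<in> {1..l} \<Longrightarrow> Zr j > 0"
  using chU by auto

lemma chart_inj: "r \<in> dm \<Longrightarrow> s \<in> dm \<Longrightarrow> H \<in> HH \<Longrightarrow> \<phi> r <#\<^bsub>G\<^esub> H = \<phi> s <#\<^bsub>G\<^esub> H \<Longrightarrow> r = s"
  using chBig by blast

lemma phi_car: "r \<in> dm \<Longrightarrow> \<phi> r \<in> carrier G" using chartD(1) by blast

lemma XHD: "y \<in> XH G act X HH \<Longrightarrow> y \<in> X \<and> stabilizer G act y \<in> HH"
  unfolding XH_def by blast

end

sublocale ctx \<subseteq> GG: group G by (rule grp)
sublocale ctx \<subseteq> GA: group_action G X act by (rule ga)

context ctx begin

lemma act_closed: "g \<in> carrier G \<Longrightarrow> y \<in> X \<Longrightarrow> act g y \<in> X"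
  using GA.element_image by blast

lemma act_comp: "y \<in> X \<Longrightarrow> g \<in> carrier G \<Longrightarrow> h \<in> carrier G \<Longrightarrow> act (g \<otimes>\<^bsub>G\<^esub> h) y = act g (act h y)"
  by (rule GA.composition_rule)

lemma act_one: "y \<in> X \<Longrightarrow> act \<one>\<^bsub>G\<^esub> y = y"
proof -
  assume "y \<in> X"
  hence "(\<lambda>x \<in> X. x) y = y" by simp
  thus ?thesis using GA.id_eq_one by simp
qed

lemma act_inv_l: "y \<in> X \<Longrightarrow> g \<in> carrier G \<Longrightarrow> act (inv\<^bsub>G\<^esub> g) (act g y) = y"
proof -
  assume a: "y \<in> X" "g \<in> carrier G"
  have "act (inv\<^bsub>G\<^esub> g) (act g y) = act (inv\<^bsub>G\<^esub> g \<otimes>\<^bsub>G\<^esub> g) y"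
    using act_comp[OF a(1) GG.inv_closed[OF a(2)] a(2)] by simp
  also have "\<dots> = y" using a by (simp add: act_one)
  finally show ?thesis .
qed

lemma act_inv_r: "y \<in> X \<Longrightarrow> g \<in> carrier G \<Longrightarrow> act g (act (inv\<^bsub>G\<^esub> g) y) = y"
proof -
  assume a: "y \<in> X" "g \<in> carrier G"
  have "act g (act (inv\<^bsub>G\<^esub> g) y) = act (g \<otimes>\<^bsub>G\<^esub> inv\<^bsub>G\<^esub> g) y"
    using act_comp[OF a(1) a(2) GG.inv_closed[OF a(2)]] by simp
  also have "\<dots> = y" using a by (simp add: act_one)
  finally show ?thesis .
qed

lemma stab_cos:
  assumes "y \<in> X" "g \<in> carrier G" "g' \<in> carrier G"
    "g <#\<^bsub>G\<^esub> stabilizer G act y = g' <#\<^bsub>G\<^esub> stabilizer G act y"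
  shows "act g y = act g' y"
proof -
  have sg: "subgroup (stabilizer G act y) G" using GA.stabilizer_subgroup[OF assms(1)] .
  have "g' \<otimes>\<^bsub>G\<^esub> \<one>\<^bsub>G\<^esub> \<in> g' <#\<^bsub>G\<^esub> stabilizer G act y"
    unfolding l_coset_def using subgroup.one_closed[OF sg] by blast
  hence "g' \<in> g <#\<^bsub>G\<^esub> stabilizer G act y" using assms(3,4) by simp
  then obtain h where h: "h \<in> stabilizer G act y" "g' = g \<otimes>\<^bsub>G\<^esub> h"
    unfolding l_coset_def by blast
  have hc: "h \<in> carrier G" "act h y = y" using h(1) unfolding stabilizer_def by auto
  show ?thesis using h(2) act_comp[OF assms(1) assms(2) hc(1)] hc(2) by simp
qed

lemma cos_stab:
  assumes "y \<in> X" "g \<in> carrier G" "g' \<in> carrier G" "act g y = act g' y"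
  shows "g <#\<^bsub>G\<^esub> stabilizer G act y = g' <#\<^bsub>G\<^esub> stabilizer G act y"
proof -
  have sg: "subgroup (stabilizer G act y) G" using GA.stabilizer_subgroup[OF assms(1)] .
  define h where "h = inv\<^bsub>G\<^esub> g \<otimes>\<^bsub>G\<^esub> g'"
  have hc: "h \<in> carrier G" unfolding h_def using assms(2,3) by simp
  have "act h y = act (inv\<^bsub>G\<^esub> g) (act g' y)" unfolding h_def
    using act_comp[OF assms(1) GG.inv_closed[OF assms(2)] assms(3)] .
  also have "\<dots> = y" using act_inv_l[OF assms(1,2)] assms(4)[symmetric] by simp
  finally have "h \<in> stabilizer G act y" using hc unfolding stabilizer_def by blast
  moreover have "g' = g \<otimes>\<^bsub>G\<^esub> h" unfolding h_def using assms(2,3)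
    by (simp add: GG.m_assoc[symmetric])
  ultimately have "g' \<in> g <#\<^bsub>G\<^esub> stabilizer G act y" unfolding l_coset_def by blast
  thus ?thesis using GG.l_repr_independence[OF _ assms(2) sg] by simp
qed

lemma ax1:
  assumes "y \<in> XH G act X HH" "r \<in> dm" "s \<in> dm" "ptrans (padd r s) Zs \<subseteq> dm"
  shows "\<exists>z\<in>Zs. act (\<phi> r) (act (\<phi> s) y) = act (\<phi> (padd (padd r s) z)) y \<and> padd (padd r s) z \<in> dm"
proof -
  have y: "y \<in> X" "stabilizer G act y \<in> HH" using XHD[OF assms(1)] by auto
  obtain z where z: "z \<in> Zs" "(\<phi> r \<otimes>\<^bsub>G\<^esub> \<phi> s) <#\<^bsub>G\<^esub> stabilizer G act y = \<phi> (padd (padd r s) z) <#\<^bsub>G\<^esub> stabilizer G act y"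
    using chBig[OF assms(2,3) y(2)] assms(4) by blast
  have m: "padd (padd r s) z \<in> dm" using assms(4) z(1) unfolding ptrans_def by blast
  have c: "\<phi> r \<in> carrier G" "\<phi> s \<in> carrier G" "\<phi> (padd (padd r s) z) \<in> carrier G"
    using phi_car assms(2,3) m by auto
  have "act (\<phi> r \<otimes>\<^bsub>G\<^esub> \<phi> s) y = act (\<phi> (padd (padd r s) z)) y"
    using stab_cos[OF y(1) _ c(3) z(2)] c by simp
  thus ?thesis using act_comp[OF y(1) c(1,2)] z(1) m by auto
qed

lemma ax2:
  assumes "y \<in> XH G act X HH" "r \<in> dm" "s \<in> dm" "ptrans (pminus r s) Zs \<subseteq> dm"
  shows "\<exists>z\<in>Zs. act (\<phi> r) (act (inv\<^bsub>G\<^esub> \<phi> s) y) = act (\<phi> (padd (pminus r s) z)) y \<and> padd (pminus r s) z \<in> dm"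
proof -
  have y: "y \<in> X" "stabilizer G act y \<in> HH" using XHD[OF assms(1)] by auto
  obtain z where z: "z \<in> Zs" "(\<phi> r \<otimes>\<^bsub>G\<^esub> inv\<^bsub>G\<^esub> \<phi> s) <#\<^bsub>G\<^esub> stabilizer G act y = \<phi> (padd (pminus r s) z) <#\<^bsub>G\<^esub> stabilizer G act y"
    using chBig[OF assms(2,3) y(2)] assms(4) by blast
  have m: "padd (pminus r s) z \<in> dm" using assms(4) z(1) unfolding ptrans_def by blast
  have c: "\<phi> r \<in> carrier G" "inv\<^bsub>G\<^esub> \<phi> s \<in> carrier G" "\<phi> (padd (pminus r s) z) \<in> carrier G"
    using phi_car assms(2,3) m by auto
  have "act (\<phi> r \<otimes>\<^bsub>G\<^esub> inv\<^bsub>G\<^esub> \<phi> s) y = act (\<phi> (padd (pminus r s) z)) y"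
    using stab_cos[OF y(1) _ c(3) z(2)] c by simp
  thus ?thesis using act_comp[OF y(1) c(1,2)] z(1) m by auto
qed

lemma ax3:
  assumes "y \<in> XH G act X HH" "r \<in> dm" "s \<in> dm" "ptrans (padd (pneg r) s) Zs \<subseteq> dm"
  shows "\<exists>z\<in>Zs. act (inv\<^bsub>G\<^esub> \<phi> r) (act (\<phi> s) y) = act (\<phi> (padd (padd (pneg r) s) z)) y \<and> padd (padd (pneg r) s) z \<in> dm"
proof -
  have y: "y \<in> X" "stabilizer G act y \<in> HH" using XHD[OF assms(1)] by auto
  obtain z where z: "z \<in> Zs" "(inv\<^bsub>G\<^esub> \<phi> r \<otimes>\<^bsub>G\<^esub> \<phi> s) <#\<^bsub>G\<^esub> stabilizer G act y = \<phi> (padd (padd (pneg r) s) z) <#\<^bsub>G\<^esub> stabilizer G act y"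
    using chBig[OF assms(2,3) y(2)] assms(4) by blast
  have m: "padd (padd (pneg r) s) z \<in> dm" using assms(4) z(1) unfolding ptrans_def by blast
  have c: "inv\<^bsub>G\<^esub> \<phi> r \<in> carrier G" "\<phi> s \<in> carrier G" "\<phi> (padd (padd (pneg r) s) z) \<in> carrier G"
    using phi_car assms(2,3) m by auto
  have "act (inv\<^bsub>G\<^esub> \<phi> r \<otimes>\<^bsub>G\<^esub> \<phi> s) y = act (\<phi> (padd (padd (pneg r) s) z)) y"
    using stab_cos[OF y(1) _ c(3) z(2)] c by simp
  thus ?thesis using act_comp[OF y(1) c(1,2)] z(1) m by auto
qed

lemma act_inj:
  assumes "y \<in> XH G act X HH" "r \<in> dm" "s \<in> dm" "act (\<phi> r) y = act (\<phi> s) y"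
  shows "r = s"
proof -
  have y: "y \<in> X" "stabilizer G act y \<in> HH" using XHD[OF assms(1)] by auto
  have "\<phi> r <#\<^bsub>G\<^esub> stabilizer G act y = \<phi> s <#\<^bsub>G\<^esub> stabilizer G act y"
    using cos_stab[OF y(1) phi_car[OF assms(2)] phi_car[OF assms(3)] assms(4)] .
  thus ?thesis using chart_inj[OF assms(2,3) y(2)] by blast
qed

end

lemma nf: "0 \<le> (x::real) \<Longrightarrow> real (nat \<lfloor>x\<rfloor>) \<le> x \<and> x < real (nat \<lfloor>x\<rfloor>) + 1"
proof -
  assume "0 \<le> x"
  hence "real (nat \<lfloor>x\<rfloor>) = real_of_int \<lfloor>x\<rfloor>" by simp
  thus ?thesis by linarith
qed

lemma nn: "nat \<lfloor>(c::real) * real (k::nat)\<rfloor> = m * k" if "c = real m" for m :: nat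
proof -
  have "c * real k = real (m * k)" using that by simp
  then show ?thesis by (metis floor_of_nat nat_int)
qed

lemma num:
  fixes \<delta> \<epsilon> q :: real and aj Lj Zj :: nat
  assumes d0: "0 < \<delta>" "\<delta> < 1" and e: "0 < \<epsilon>" "\<epsilon> < 1/16" "6*\<epsilon> < q" "q < 1/2"
    and Z1: "1 \<le> Zj" and hZ: "nat \<lfloor>2 * real Zj\<rfloor> \<le> nat \<lfloor>\<delta> * real Lj\<rfloor>" and aL: "aj \<le> Lj"
    and hd: "nat \<lfloor>(2 * \<delta>) * real Lj\<rfloor> \<le> nat \<lfloor>\<epsilon> * real aj\<rfloor>"
  defines "Lin \<equiv> int (nat \<lfloor>(1 - \<delta>) * real Lj\<rfloor>)" and "Lout \<equiv> int (nat \<lfloor>(1 + \<delta>) * real Lj\<rfloor>)"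
    and "Q \<equiv> int (nat \<lfloor>q * real aj\<rfloor>)" and "Q5 \<equiv> int (nat \<lfloor>(5 * q) * real aj\<rfloor>)"
    and "s \<equiv> int aj div 4"
  shows "Lout - Lin + int Zj \<le> Q" "Q + int Zj \<le> Lin" "Lout - Lin + Q + 2 * int Zj \<le> Q5"
    "int Zj \<le> int aj" "1 \<le> s" "s + 2 * int Zj \<le> Lin" "Lout - Lin + 2 * int Zj + 2 * s \<le> int aj"
    "int aj \<le> 5 * s" "Lout \<le> 2 * int Lj" "Lin \<le> Lout" "0 \<le> Lin" "Q \<le> int Lj" "64 \<le> aj"
    "0 \<le> Q"
proof -
  define d where "d = \<delta> * real Lj"
  define ea where "ea = \<epsilon> * real aj"
  define qa where "qa = q * real aj"
  have n2: "nat \<lfloor>2 * real Zj\<rfloor> = 2 * Zj" by (rule nn, simp)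
  have "\<delta> * real Lj \<ge> 0" using d0 by simp
  from nf[OF this] have "real (nat \<lfloor>\<delta> * real Lj\<rfloor>) \<le> d" unfolding d_def by simp
  moreover have "real (2 * Zj) \<le> real (nat \<lfloor>\<delta> * real Lj\<rfloor>)" using hZ n2 by simp
  ultimately have z2: "2 * real Zj \<le> d" by simp
  have dpos: "d \<ge> 2" using z2 Z1 by simp
  have "2 * d \<ge> 0" using dpos by simp
  from nf[OF this] have f2d: "real (nat \<lfloor>2 * d\<rfloor>) > 2 * d - 1" by simp
  have hd': "nat \<lfloor>2 * d\<rfloor> \<le> nat \<lfloor>ea\<rfloor>" using hd unfolding d_def ea_def by (simp add: mult.assoc)
  have ea0: "ea \<ge> 0" unfolding ea_def using e by simp
  from nf[OF ea0] have fea: "real (nat \<lfloor>ea\<rfloor>) \<le> ea" by simp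
  have "real (nat \<lfloor>2 * d\<rfloor>) \<le> real (nat \<lfloor>ea\<rfloor>)" using hd' by simp
  hence ea3: "ea > 3" using f2d fea dpos by linarith
  have "real (nat \<lfloor>2 * d\<rfloor>) \<ge> 4"
  proof -
    have "nat \<lfloor>2 * d\<rfloor> \<ge> 4" using dpos by linarith
    thus ?thesis by simp
  qed
  hence ea4: "ea \<ge> 4" using fea \<open>real (nat \<lfloor>2 * d\<rfloor>) \<le> real (nat \<lfloor>ea\<rfloor>)\<close> by linarith
  have "real (nat \<lfloor>ea\<rfloor>) > ea - 1" using nf[OF ea0] by simp
  hence dup: "2 * d < ea + 1"
    using f2d \<open>real (nat \<lfloor>2 * d\<rfloor>) \<le> real (nat \<lfloor>ea\<rfloor>)\<close> fea by linarith
  have "real aj \<noteq> 0" proof assume "real aj = 0" thus False using ea4 unfolding ea_def by simp qed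
  hence apos: "real aj > 0" by simp
  have eaa: "16 * ea < real aj" unfolding ea_def using e apos by (simp add: mult.assoc[symmetric])
  have qae: "qa > 6 * ea" unfolding qa_def ea_def using e apos by (simp add: mult.assoc[symmetric])
  have qaa: "2 * qa < real aj" unfolding qa_def using e apos by (simp add: mult.assoc[symmetric])
  have qpos: "q > 0" using e by linarith
  have qa0: "qa \<ge> 0" unfolding qa_def using qpos by simp
  have aL': "real aj \<le> real Lj" using aL by simp
  have dL: "d < real Lj" using dup eaa aL' ea4 by linarith
  have e1: "(1 - \<delta>) * real Lj = real Lj - d" "(1 + \<delta>) * real Lj = real Lj + d"
    "(5 * q) * real aj = 5 * qa" unfolding d_def qa_def by (simp_all add: algebra_simps)
  have Lin1: "real_of_int Lin \<le> real Lj - d" "real_of_int Lin > real Lj - d - 1"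
    using nf[of "real Lj - d"] dL unfolding Lin_def e1 by auto
  have Lout1: "real_of_int Lout \<le> real Lj + d" "real_of_int Lout > real Lj + d - 1"
    using nf[of "real Lj + d"] dpos unfolding Lout_def e1 by auto
  have Q1: "real_of_int Q \<le> qa" "real_of_int Q > qa - 1" "0 \<le> Q"
    using nf[of qa] qa0 unfolding Q_def qa_def by auto
  have Q51: "real_of_int Q5 > 5 * qa - 1"
    using nf[of "5 * qa"] qa0 unfolding Q5_def e1 by auto
  have s1: "4 * s \<le> int aj" "4 * s > int aj - 4" unfolding s_def by auto
  have s2: "4 * real_of_int s \<le> real aj" "4 * real_of_int s > real aj - 4"
    using s1 by linarith+
  show "Lout - Lin + int Zj \<le> Q"
  proof -
    have "real_of_int (Lout - Lin + int Zj) < real_of_int Q + 1" using Lin1 Lout1 Q1 z2 dup qae ea4 ea4 aL' by (simp; linarith)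
    thus ?thesis by linarith
  qed
  show "Q + int Zj \<le> Lin"
  proof -
    have "real_of_int (Q + int Zj) < real_of_int Lin + 1" using Lin1 Q1 z2 dup qaa eaa aL' ea4 aL' by (simp; linarith)
    thus ?thesis by linarith
  qed
  show "Lout - Lin + Q + 2 * int Zj \<le> Q5"
  proof -
    have "real_of_int (Lout - Lin + Q + 2 * int Zj) < real_of_int Q5 + 1" using Lin1 Lout1 Q1 Q51 z2 dup qae ea4 ea4 aL' by (simp; linarith)
    thus ?thesis by linarith
  qed
  show "int Zj \<le> int aj"
  proof -
    have "real Zj < real aj + 1" using z2 dup eaa by linarith
    thus ?thesis by linarith
  qed
  show "64 \<le> aj"
  proof -
    have "real aj > 64" using eaa ea4 by linarith
    thus ?thesis by linarith
  qed
  show "1 \<le> s"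
  proof -
    have "real_of_int s > 15" using s2 eaa ea4 by linarith
    thus ?thesis by linarith
  qed
  show "s + 2 * int Zj \<le> Lin"
  proof -
    have "real_of_int (s + 2 * int Zj) < real_of_int Lin + 1" using s2 Lin1 z2 dup eaa aL' ea4 aL' by (simp; linarith)
    thus ?thesis by linarith
  qed
  show "Lout - Lin + 2 * int Zj + 2 * s \<le> int aj"
  proof -
    have "real_of_int (Lout - Lin + 2 * int Zj + 2 * s) < real aj + 1" using s2 Lin1 Lout1 z2 dup eaa ea4 ea4 aL' by (simp; linarith)
    thus ?thesis by linarith
  qed
  show "int aj \<le> 5 * s"
  proof -
    have "real aj < real_of_int (5 * s) + 1" using s2 eaa ea4 by (simp; linarith)
    thus ?thesis by linarith
  qed
  show "Lout \<le> 2 * int Lj"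
  proof -
    have "real_of_int Lout < real_of_int (2 * int Lj) + 1" using Lout1 dL by (simp; linarith)
    thus ?thesis by linarith
  qed
  show "Lin \<le> Lout"
  proof -
    have "real_of_int Lin < real_of_int Lout + 1" using Lout1 Lin1 dpos by (simp; linarith)
    thus ?thesis by linarith
  qed
  show "0 \<le> Lin" unfolding Lin_def by simp
  show "Q \<le> int Lj"
  proof -
    have "real_of_int Q < real_of_int (int Lj) + 1" using Q1 qaa aL' apos by simp
    thus ?thesis by linarith
  qed
  show "0 \<le> Q" by (rule Q1(3))
qed

lemma nn2: "nat \<lfloor>(2::real) ^ n * real (k::nat)\<rfloor> = 2 ^ n * k" by (rule nn, simp)

lemma numeral_pow_2_5: "(2::nat)^5 = 32" by simp

lemma pow_big: "l \<ge> 1 \<Longrightarrow> (2::nat) * 2 ^ (17 * l) + 16 \<le> 2 ^ (22 * l)"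
proof -
  assume "l \<ge> 1"
  have "(2::nat) ^ (22 * l) = 2 ^ (17 * l) * 2 ^ (5 * l)" by (simp add: power_add[symmetric])
  moreover have "(2::nat) ^ (5 * l) \<ge> 2 ^ 5" using \<open>l \<ge> 1\<close> by (intro power_increasing) auto
  moreover have "(2::nat) ^ (17 * l) \<ge> 2 ^ 17" using \<open>l \<ge> 1\<close> by (intro power_increasing) auto
  ultimately have "(2::nat) ^ (22 * l) \<ge> 2 ^ (17 * l) * 32" by (metis mult_le_mono2 numeral_pow_2_5)
  thus ?thesis using \<open>(2::nat) ^ (17 * l) \<ge> 2 ^ 17\<close> by simp
qed

locale ctx2 = ctx G act X l \<phi> D Zr HH
  for G :: "('g,'b) monoid_scheme" and act :: "'g \<Rightarrow> 'x \<Rightarrow> 'x" and X :: "'x set"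
    and l :: nat and \<phi> :: "'c::{finite,ab_group_add} pt \<Rightarrow> 'g" and D Zr :: "nat \<Rightarrow> nat"
    and HH :: "'g set set" +
  fixes a :: "nat \<Rightarrow> nat" and \<epsilon> q :: real and i :: nat
  assumes eps: "0 < \<epsilon>" "\<epsilon> < 1/16" "6*\<epsilon> < q" "q < 1/2" and iin: "i \<in> {1..l}"
begin

definition goodc :: "real \<Rightarrow> rect \<Rightarrow> bool" where
  "goodc \<delta> B \<longleftrightarrow> 0 < \<delta> \<and> \<delta> < 1 \<and> is_rect l B \<and>
    (\<forall>j\<in>{1..l}. nat \<lfloor>2 * real (Zr j)\<rfloor> \<le> nat \<lfloor>\<delta> * real (snd B j)\<rfloor> \<and> a j \<le> snd B j \<and>
       nat \<lfloor>(2 * \<delta>) * real (snd B j)\<rfloor> \<le> nat \<lfloor>\<epsilon> * real (a j)\<rfloor> \<and>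
       \<bar>fst B j\<bar> + int (2 ^ (22 * l) * snd B j) \<le> int (D j))"

abbreviation "Qv j \<equiv> int (nat \<lfloor>q * real (a j)\<rfloor>)"
abbreviation "Q5v j \<equiv> int (nat \<lfloor>(5 * q) * real (a j)\<rfloor>)"
abbreviation "Linv \<delta> B j \<equiv> int (nat \<lfloor>(1 - \<delta>) * real (snd B j)\<rfloor>)"
abbreviation "Loutv \<delta> B j \<equiv> int (nat \<lfloor>(1 + \<delta>) * real (snd B j)\<rfloor>)"
abbreviation "sv j \<equiv> int (a j) div 4"
abbreviation "PP \<equiv> (2::nat) ^ (17 * l)"

lemma l1: "l \<ge> 1" using iin by auto

lemma goodn:
  assumes "goodc \<delta> B" "j \<in> {1..l}"
  shows "Loutv \<delta> B j - Linv \<delta> B j + int (Zr j) \<le> Qv j" "Qv j + int (Zr j) \<le> Linv \<delta> B j"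
    "Loutv \<delta> B j - Linv \<delta> B j + Qv j + 2 * int (Zr j) \<le> Q5v j"
    "int (Zr j) \<le> int (a j)" "1 \<le> sv j" "sv j + 2 * int (Zr j) \<le> Linv \<delta> B j"
    "Loutv \<delta> B j - Linv \<delta> B j + 2 * int (Zr j) + 2 * sv j \<le> int (a j)"
    "int (a j) \<le> 5 * sv j" "Loutv \<delta> B j \<le> 2 * int (snd B j)" "Linv \<delta> B j \<le> Loutv \<delta> B j"
    "0 \<le> Linv \<delta> B j" "Qv j \<le> int (snd B j)" "64 \<le> a j" "0 \<le> Qv j"
    "\<bar>fst B j\<bar> + (2 * int PP + 16) * int (snd B j) \<le> int (D j)" "1 \<le> Zr j"
    "a j \<le> snd B j" "\<bar>fst B j\<bar> + 16 * int (snd B j) \<le> int (D j)"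
proof -
  have g: "0 < \<delta>" "\<delta> < 1" "nat \<lfloor>2 * real (Zr j)\<rfloor> \<le> nat \<lfloor>\<delta> * real (snd B j)\<rfloor>" "a j \<le> snd B j"
       "nat \<lfloor>(2 * \<delta>) * real (snd B j)\<rfloor> \<le> nat \<lfloor>\<epsilon> * real (a j)\<rfloor>"
       "\<bar>fst B j\<bar> + int (2 ^ (22 * l) * snd B j) \<le> int (D j)"
    using assms unfolding goodc_def by auto
  have z1: "1 \<le> Zr j" using chartD(3)[OF assms(2)] by simp
  note N = num[OF g(1,2) eps z1 g(3,4,5)]
  show "Loutv \<delta> B j - Linv \<delta> B j + int (Zr j) \<le> Qv j" "Qv j + int (Zr j) \<le> Linv \<delta> B j"
    "Loutv \<delta> B j - Linv \<delta> B j + Qv j + 2 * int (Zr j) \<le> Q5v j"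
    "int (Zr j) \<le> int (a j)" "1 \<le> sv j" "sv j + 2 * int (Zr j) \<le> Linv \<delta> B j"
    "Loutv \<delta> B j - Linv \<delta> B j + 2 * int (Zr j) + 2 * sv j \<le> int (a j)"
    "int (a j) \<le> 5 * sv j" "Loutv \<delta> B j \<le> 2 * int (snd B j)" "Linv \<delta> B j \<le> Loutv \<delta> B j"
    "0 \<le> Linv \<delta> B j" "Qv j \<le> int (snd B j)" "64 \<le> a j" "0 \<le> Qv j"
    using N by auto
  show "1 \<le> Zr j" by (rule z1)
  show "a j \<le> snd B j" by (rule g(4))
  have "2 * PP + 16 \<le> (2::nat) ^ (22 * l)" using pow_big[OF l1] .
  hence "(2 * PP + 16) * snd B j \<le> 2 ^ (22 * l) * snd B j" by (rule mult_right_mono) simp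
  hence "int ((2 * PP + 16) * snd B j) \<le> int (2 ^ (22 * l) * snd B j)" by linarith
  thus G15: "\<bar>fst B j\<bar> + (2 * int PP + 16) * int (snd B j) \<le> int (D j)" using g(6) by simp
  have "16 * int (snd B j) \<le> (2 * int PP + 16) * int (snd B j)" by (intro mult_right_mono) auto
  thus "\<bar>fst B j\<bar> + 16 * int (snd B j) \<le> int (D j)" using G15 by linarith
qed

end

context ctx2 begin

definition spt :: "'c pt \<Rightarrow> rect \<Rightarrow> 'c pt" where
  "spt b B = ((\<lambda>j. if j \<in> {1..l} \<and> j \<noteq> i then (if fst b j - fst B j \<ge> 0 then - Qv j else Qv j) else 0), 0)"

lemma spt_valid: "valid_pt l (spt b B)" unfolding spt_def valid_pt_def by auto

lemma spt_in: "spt b B \<in> (rset l (rdrop i (rscale q (centered a))) :: 'c pt set)"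
  by (auto simp: mem_rset spt_valid) (auto simp: spt_def)

lemma outer_mem:
  assumes "goodc \<delta> B" "b \<in> (rset l (rscale (1+\<delta>) B) :: 'c pt set)"
  shows "valid_pt l b" "\<And>j. j \<in> {1..l} \<Longrightarrow> \<bar>fst b j - fst B j\<bar> \<le> Loutv \<delta> B j"
proof -
  have r: "is_rect l B" using assms(1) unfolding goodc_def by auto
  show "valid_pt l b" using assms(2) r by (simp add: mem_rset)
  show "\<And>j. j \<in> {1..l} \<Longrightarrow> \<bar>fst b j - fst B j\<bar> \<le> Loutv \<delta> B j" using assms(2) r by (simp add: mem_rset)
qed

lemma side_pt:
  assumes gd: "goodc \<delta> B" and zx: "z \<in> XH G act X HH" and bo: "b \<in> rset l (rscale (1+\<delta>) B)"
    and yz: "y = act (\<phi> b) z"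
    and inn: "act_img act \<phi> (rset l (rscale (1-\<delta>) B)) z \<subseteq> U"
    and H: "\<bar>fst b i - fst B i\<bar> \<le> Linv \<delta> B i - Qv i - int (Zr i)"
    and k: "k = Qv i \<or> k = - Qv i"
  shows "act (\<phi> (padd (pe i k) (spt b B))) y \<in> U"
proof -
  define w where "w = padd (pe i k) (spt b B)"
  have r: "is_rect l B" using gd unfolding goodc_def by auto
  note bm = outer_mem[OF gd bo]
  have wv: "valid_pt l w" unfolding w_def using spt_valid iin by simp
  have wc: "fst w j = (if j = i then k else if j \<in> {1..l} then (if fst b j - fst B j \<ge> 0 then - Qv j else Qv j) else 0)" for j
    unfolding w_def spt_def by simp
  have wb: "\<bar>fst w j\<bar> \<le> Qv j" if "j \<in> {1..l}" for j
    using wc[of j] k that goodn(14)[OF gd that] by auto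
  have wdm: "w \<in> dm"
  proof -
    have "\<bar>fst w j\<bar> \<le> int (D j)" if "j \<in> {1..l}" for j
      using wb[OF that] goodn(12,18)[OF gd that] by linarith
    thus ?thesis using wv by (simp add: mem_rset_c)
  qed
  have bdm: "b \<in> dm"
  proof -
    have "\<bar>fst b j\<bar> \<le> int (D j)" if "j \<in> {1..l}" for j
      using bm(2)[OF that] goodn(9,18)[OF gd that] by linarith
    thus ?thesis using bm(1) by (simp add: mem_rset_c)
  qed
  have pt: "ptrans (padd w b) Zs \<subseteq> dm"
  proof (rule ptrans_sub)
    show "valid_pt l (padd w b)" using wv bm(1) by simp
    show "\<forall>j\<in>{1..l}. \<bar>fst (padd w b) j\<bar> + int (Zr j) \<le> int (D j)"
    proof
      fix j assume j: "j \<in> {1..l}"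
      show "\<bar>fst (padd w b) j\<bar> + int (Zr j) \<le> int (D j)"
        using wb[OF j] bm(2)[OF j] goodn(4,9,12,17,18)[OF gd j] by simp
    qed
  qed
  obtain zz where zz: "zz \<in> Zs" "act (\<phi> w) (act (\<phi> b) z) = act (\<phi> (padd (padd w b) zz)) z"
    using ax1[OF zx wdm bdm pt] by blast
  have zzc: "valid_pt l zz" "\<And>j. j \<in> {1..l} \<Longrightarrow> \<bar>fst zz j\<bar> \<le> int (Zr j)"
    using zz(1) by (auto simp: mem_rset_c)
  have "padd (padd w b) zz \<in> rset l (rscale (1-\<delta>) B)"
  proof -
    have "\<bar>fst w j + fst b j + fst zz j - fst B j\<bar> \<le> Linv \<delta> B j" if j: "j \<in> {1..l}" for j
    proof (cases "j = i")
      case True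
      then show ?thesis using wc[of j] k H zzc(2)[OF j] by (simp add: abs_le_iff; arith)
    next
      case False
      then show ?thesis using wc[of j] j bm(2)[OF j] zzc(2)[OF j] goodn(1,2)[OF gd j]
        by (simp add: abs_le_iff; arith)
    qed
    thus ?thesis using r wv bm(1) zzc(1) by (simp add: mem_rset)
  qed
  hence "act (\<phi> (padd (padd w b) zz)) z \<in> act_img act \<phi> (rset l (rscale (1-\<delta>) B)) z"
    unfolding act_img_def by blast
  thus ?thesis using inn zz(2) yz unfolding w_def[symmetric] by auto
qed

lemma side:
  assumes gd: "goodc \<delta> B" and yb: "y \<in> boundary G act X l \<phi> HH E (rscale q (centered a)) i"
    and zx: "z \<in> XH G act X HH" and bo: "b \<in> rset l (rscale (1+\<delta>) B)"
    and yz: "y = act (\<phi> b) z"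
    and inn: "act_img act \<phi> (rset l (rscale (1-\<delta>) B)) z \<subseteq> U"
    and UE: "\<forall>u\<in>U. \<forall>u'\<in>U. (u, u') \<in> E"
  shows "\<bar>fst b i - fst B i\<bar> > Linv \<delta> B i - Qv i - int (Zr i)"
proof (rule ccontr)
  assume "\<not> ?thesis"
  hence H: "\<bar>fst b i - fst B i\<bar> \<le> Linv \<delta> B i - Qv i - int (Zr i)" by simp
  define pP where "pP = act (\<phi> (padd (pe i (Qv i)) (spt b B))) y"
  define pM where "pM = act (\<phi> (padd (pe i (- Qv i)) (spt b B))) y"
  have inU: "pP \<in> U" "pM \<in> U" unfolding pP_def pM_def using side_pt[OF gd zx bo yz inn H] by auto
  have e1: "(pP, pP) \<in> E" "(pM, pP) \<in> E" using UE inU by auto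
  have "pP \<in> act_img act \<phi> (ptrans (pe i (int (snd (rscale q (centered a)) i))) (rset l (rdrop i (rscale q (centered a))))) y"
    unfolding pP_def act_img_def ptrans_def using spt_in by simp
  hence "pP \<in> E `` act_img act \<phi> (ptrans (pe i (int (snd (rscale q (centered a)) i))) (rset l (rdrop i (rscale q (centered a))))) y"
    using e1(1) by blast
  moreover have "pM \<in> act_img act \<phi> (ptrans (pe i (- int (snd (rscale q (centered a)) i))) (rset l (rdrop i (rscale q (centered a))))) y"
    unfolding pM_def act_img_def ptrans_def using spt_in by simp
  hence "pP \<in> E `` act_img act \<phi> (ptrans (pe i (- int (snd (rscale q (centered a)) i))) (rset l (rdrop i (rscale q (centered a))))) y"
    using e1(2) by blast
  ultimately show False using yb unfolding boundary_def by blast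
qed

end

lemma pow19: "l \<ge> 1 \<Longrightarrow> (2::nat) * 2 ^ (17 * l) + 1 \<le> 2 ^ (19 * l)"
proof -
  assume "l \<ge> 1"
  have "(2::nat) ^ (19 * l) = 2 ^ (17 * l) * 2 ^ (2 * l)" by (simp add: power_add[symmetric])
  moreover have "(2::nat) ^ (2 * l) \<ge> 2 ^ 2" using \<open>l \<ge> 1\<close> by (intro power_increasing) auto
  ultimately have "(2::nat) ^ (19 * l) \<ge> 2 ^ (17 * l) * 4" by (metis mult_le_mono2 power2_eq_square numeral_Bit0 mult_2 )
  moreover have "(2::nat) ^ (17 * l) \<ge> 1" by simp
  ultimately show ?thesis by linarith
qed

context ctx2 begin

lemma vmem:
  assumes "v \<in> (rset l (rscale (2 ^ (17 * l)) (centered a)) :: 'c pt set)"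
  shows "valid_pt l v" "\<And>j. j \<in> {1..l} \<Longrightarrow> \<bar>fst v j\<bar> \<le> int PP * int (a j)"
  using assms by (auto simp: mem_rset nn2)

lemma goodD:
  assumes "goodc \<delta> B" "j \<in> {1..l}"
  shows "\<bar>fst B j\<bar> + 2 * (int PP * int (snd B j)) + 16 * int (snd B j) \<le> int (D j)"
    "int PP * int (a j) \<le> int PP * int (snd B j)"
proof -
  show "\<bar>fst B j\<bar> + 2 * (int PP * int (snd B j)) + 16 * int (snd B j) \<le> int (D j)"
    using goodn(15)[OF assms] by (simp add: algebra_simps)
  show "int PP * int (a j) \<le> int PP * int (snd B j)"
    using goodn(17)[OF assms] by (intro mult_left_mono) auto
qed

lemma pair:
  assumes gd: "goodc \<delta> B" and zx: "z \<in> XH G act X HH" and xx: "x \<in> XH G act X HH"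
    and y1x: "y1 \<in> XH G act X HH"
    and b1: "b1 \<in> rset l (rscale (1+\<delta>) B)" "y1 = act (\<phi> b1) z"
    and v1: "v1 \<in> rset l (rscale (2 ^ (17 * l)) (centered a))" "y1 = act (\<phi> v1) x"
    and b2: "b2 \<in> rset l (rscale (1+\<delta>) B)" "y2 = act (\<phi> b2) z"
    and v2: "v2 \<in> rset l (rscale (2 ^ (17 * l)) (centered a))" "y2 = act (\<phi> v2) x"
    and s1: "\<bar>fst b1 i - fst B i\<bar> > Linv \<delta> B i - Qv i - int (Zr i)"
    and s2: "\<bar>fst b2 i - fst B i\<bar> > Linv \<delta> B i - Qv i - int (Zr i)"
    and ss: "(fst b1 i - fst B i > 0) = (fst b2 i - fst B i > 0)"
  shows "y2 \<in> act_img act \<phi> (psum (rset l (rscale (2 ^ (19 * l)) (rdrop i (centered a))))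
                                 (rset l (rscale (5 * q) (centered a)))) y1"
proof -
  note bm1 = outer_mem[OF gd b1(1)] and bm2 = outer_mem[OF gd b2(1)]
  note vm1 = vmem[OF v1(1)] and vm2 = vmem[OF v2(1)]
  have zX: "z \<in> X" and xX: "x \<in> X" using XHD zx xx by auto
  have b1dm: "b1 \<in> dm" "b2 \<in> dm"
  proof -
    have "\<bar>fst b1 j\<bar> \<le> int (D j)" "\<bar>fst b2 j\<bar> \<le> int (D j)" if "j \<in> {1..l}" for j
      using bm1(2)[OF that] bm2(2)[OF that] goodn(9,18)[OF gd that] by linarith+
    thus "b1 \<in> dm" "b2 \<in> dm" using bm1(1) bm2(1) by (auto simp add: mem_rset_c)
  qed
  have v1dm: "v1 \<in> dm" "v2 \<in> dm"
  proof -
    have "\<bar>fst v1 j\<bar> \<le> int (D j)" "\<bar>fst v2 j\<bar> \<le> int (D j)" if "j \<in> {1..l}" for j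
      using vm1(2)[OF that] vm2(2)[OF that] goodD[OF gd that] by linarith+
    thus "v1 \<in> dm" "v2 \<in> dm" using vm1(1) vm2(1) by (auto simp add: mem_rset_c)
  qed
  have ptb: "ptrans (pminus b2 b1) Zs \<subseteq> dm"
  proof (rule ptrans_sub)
    show "valid_pt l (pminus b2 b1)" using bm1(1) bm2(1) by simp
    show "\<forall>j\<in>{1..l}. \<bar>fst (pminus b2 b1) j\<bar> + int (Zr j) \<le> int (D j)"
    proof
      fix j assume j: "j \<in> {1..l}"
      show "\<bar>fst (pminus b2 b1) j\<bar> + int (Zr j) \<le> int (D j)"
        using bm1(2)[OF j] bm2(2)[OF j] goodn(4,9,17,18)[OF gd j] by simp
    qed
  qed
  have ptv: "ptrans (pminus v2 v1) Zs \<subseteq> dm"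
  proof (rule ptrans_sub)
    show "valid_pt l (pminus v2 v1)" using vm1(1) vm2(1) by simp
    show "\<forall>j\<in>{1..l}. \<bar>fst (pminus v2 v1) j\<bar> + int (Zr j) \<le> int (D j)"
    proof
      fix j assume j: "j \<in> {1..l}"
      show "\<bar>fst (pminus v2 v1) j\<bar> + int (Zr j) \<le> int (D j)"
        using vm1(2)[OF j] vm2(2)[OF j] goodn(4,17)[OF gd j] goodD[OF gd j]
          abs_triangle_ineq4[of "fst v2 j" "fst v1 j"] unfolding fst_pminus by linarith
    qed
  qed
  obtain z1 where z1: "z1 \<in> Zs" "act (\<phi> b2) (act (inv\<^bsub>G\<^esub> \<phi> b1) y1) = act (\<phi> (padd (pminus b2 b1) z1)) y1"
    "padd (pminus b2 b1) z1 \<in> dm"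
    using ax2[OF y1x b1dm(2) b1dm(1) ptb] by blast
  obtain z2 where z2: "z2 \<in> Zs" "act (\<phi> v2) (act (inv\<^bsub>G\<^esub> \<phi> v1) y1) = act (\<phi> (padd (pminus v2 v1) z2)) y1"
    "padd (pminus v2 v1) z2 \<in> dm"
    using ax2[OF y1x v1dm(2) v1dm(1) ptv] by blast
  have "act (inv\<^bsub>G\<^esub> \<phi> b1) y1 = z" using b1(2) act_inv_l[OF zX phi_car[OF b1dm(1)]] by simp
  hence e1: "y2 = act (\<phi> (padd (pminus b2 b1) z1)) y1" using z1(2) b2(2) by simp
  have "act (inv\<^bsub>G\<^esub> \<phi> v1) y1 = x" using v1(2) act_inv_l[OF xX phi_car[OF v1dm(1)]] by simp
  hence e2: "y2 = act (\<phi> (padd (pminus v2 v1) z2)) y1" using z2(2) v2(2) by simp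
  define w where "w = padd (pminus v2 v1) z2"
  have weq: "padd (pminus b2 b1) z1 = w" unfolding w_def
    using act_inj[OF y1x z1(3) z2(3)] e1 e2 by simp
  have z1c: "\<And>j. j \<in> {1..l} \<Longrightarrow> \<bar>fst z1 j\<bar> \<le> int (Zr j)" using z1(1) by (auto simp: mem_rset_c)
  have z2c: "valid_pt l z2" "\<And>j. j \<in> {1..l} \<Longrightarrow> \<bar>fst z2 j\<bar> \<le> int (Zr j)" using z2(1) by (auto simp: mem_rset_c)
  have wv: "valid_pt l w" unfolding w_def using vm1(1) vm2(1) z2c(1) by simp
  define w1 :: "'c pt" where "w1 = ((\<lambda>j. if j = i then 0 else fst w j), 0)"
  define w2 :: "'c pt" where "w2 = ((\<lambda>j. if j = i then fst w i else 0), snd w)"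
  have wsplit: "w = padd w1 w2" unfolding w1_def w2_def padd_def by (cases w) auto
  have w1in: "w1 \<in> rset l (rscale (2 ^ (19 * l)) (rdrop i (centered a)))"
  proof -
    have p19: "2 * PP + 1 \<le> (2::nat) ^ (19 * l)" using pow19[OF l1] .
    have "\<bar>fst w1 j\<bar> \<le> int (nat \<lfloor>2 ^ (19 * l) * real (((a)(i := 0)) j)\<rfloor>)" if j: "j \<in> {1..l}" for j
    proof (cases "j = i")
      case True thus ?thesis unfolding w1_def by simp
    next
      case False
      have "\<bar>fst w j\<bar> \<le> 2 * (int PP * int (a j)) + int (a j)"
        unfolding w_def using vm1(2)[OF j] vm2(2)[OF j] z2c(2)[OF j] goodn(4)[OF gd j] by simp
      also have "\<dots> = int ((2 * PP + 1) * a j)" by (simp add: algebra_simps)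
      also have "\<dots> \<le> int (2 ^ (19 * l) * a j)" using p19 by (intro of_nat_mono mult_right_mono) auto
      finally show ?thesis unfolding w1_def using False by (simp add: nn2)
    qed
    moreover have "valid_pt l w1" using wv unfolding w1_def valid_pt_def by auto
    ultimately show ?thesis by (auto simp: mem_rset)
  qed
  have w2in: "w2 \<in> rset l (rscale (5 * q) (centered a))"
  proof -
    have "\<bar>fst w i\<bar> \<le> Q5v i"
    proof -
      have wi: "fst w i = fst b2 i - fst b1 i + fst z1 i" using weq[symmetric] by simp
      have "\<bar>fst b2 i - fst b1 i\<bar> \<le> Loutv \<delta> B i - (Linv \<delta> B i - Qv i - int (Zr i)) - 1"
        using s1 s2 ss bm1(2)[OF iin] bm2(2)[OF iin] by (simp add: abs_le_iff abs_less_iff; arith)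
      thus ?thesis using wi z1c[OF iin] goodn(3)[OF gd iin] by simp
    qed
    note wi5 = this
    have fw2: "fst w2 j = (if j = i then fst w i else 0)" for j unfolding w2_def by simp
    have "\<bar>fst w2 j\<bar> \<le> Q5v j" if "j \<in> {1..l}" for j
    proof (cases "j = i")
      case True thus ?thesis using fw2[of j] wi5 by simp
    next
      case False thus ?thesis using fw2[of j] by simp
    qed
    moreover have "valid_pt l w2" using iin unfolding w2_def valid_pt_def by auto
    ultimately show ?thesis by (auto simp: mem_rset)
  qed
  show ?thesis unfolding act_img_def psum_def using e2 wsplit w1in w2in unfolding w_def[symmetric] by blast
qed

end

lemma clamp: fixes K t Lo :: int shows "0 \<le> K \<Longrightarrow> \<bar>t\<bar> \<le> Lo \<Longrightarrow> K \<le> Lo \<Longrightarrow> \<bar>max (-K) (min K t) - t\<bar> \<le> Lo - K \<and> \<bar>max (-K) (min K t)\<bar> \<le> K"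
  by (auto simp: max_def min_def abs_le_iff)
lemma tri4: fixes a b c d :: int shows "\<bar>a + b - c + d\<bar> \<le> \<bar>a\<bar> + \<bar>b\<bar> + \<bar>c\<bar> + \<bar>d\<bar>" by arith
lemma tri4b: fixes a b c d :: int shows "\<bar>a + b - c - d\<bar> \<le> \<bar>a\<bar> + \<bar>b\<bar> + \<bar>c\<bar> + \<bar>d\<bar>" by arith
lemma gTb: fixes g T s :: int shows "g \<le> T \<Longrightarrow> T - g < s \<Longrightarrow> \<bar>g\<bar> \<le> \<bar>T\<bar> + s \<and> \<bar>g - T\<bar> \<le> s - 1" by arith

lemma absb: "\<bar>(x::int) - c\<bar> \<le> L \<Longrightarrow> \<bar>x\<bar> \<le> \<bar>c\<bar> + L" by arith

context ctx2 begin

definition gpt :: "(nat \<Rightarrow> int) \<Rightarrow> 'c pt" where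
  "gpt k = ((\<lambda>j. if j \<in> {1..l} then sv j * k j else 0), 0)"

lemma gpt_valid: "valid_pt l (gpt k)" unfolding gpt_def valid_pt_def by auto

lemma grid:
  assumes gd: "goodc \<delta> B" and zx: "z \<in> XH G act X HH" and xx: "x \<in> XH G act X HH"
    and bo: "b \<in> rset l (rscale (1+\<delta>) B)" and yb: "y = act (\<phi> b) z"
    and vo: "v \<in> rset l (rscale (2 ^ (17 * l)) (centered a))" and yv: "y = act (\<phi> v) x"
    and inn: "act_img act \<phi> (rset l (rscale (1-\<delta>) B)) z \<subseteq> U"
  shows "\<exists>k. (\<forall>j\<in>{1..l}. \<bar>k j\<bar> \<le> 5 * (int PP + 1)) \<and> act (\<phi> (gpt k)) x \<in> U"
proof -
  note bm = outer_mem[OF gd bo] and vm = vmem[OF vo]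
  have r: "is_rect l B" using gd unfolding goodc_def by auto
  have zX: "z \<in> X" and xX: "x \<in> X" using XHD zx xx by auto
  have bj: "\<bar>fst b j\<bar> \<le> \<bar>fst B j\<bar> + Loutv \<delta> B j" if "j \<in> {1..l}" for j
    using absb[OF bm(2)[OF that]] .
  have bdm: "b \<in> dm"
  proof -
    have "\<bar>fst b j\<bar> \<le> int (D j)" if "j \<in> {1..l}" for j
      using bj[OF that] goodn(9,18)[OF gd that] by linarith
    thus ?thesis using bm(1) by (simp add: mem_rset_c)
  qed
  have vdm: "v \<in> dm"
  proof -
    have "\<bar>fst v j\<bar> \<le> int (D j)" if "j \<in> {1..l}" for j
      using vm(2)[OF that] goodD[OF gd that] by linarith
    thus ?thesis using vm(1) by (simp add: mem_rset_c)
  qed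
  have ptu: "ptrans (padd (pneg b) v) Zs \<subseteq> dm"
  proof (rule ptrans_sub)
    show "valid_pt l (padd (pneg b) v)" using bm(1) vm(1) by simp
    show "\<forall>j\<in>{1..l}. \<bar>fst (padd (pneg b) v) j\<bar> + int (Zr j) \<le> int (D j)"
    proof
      fix j assume j: "j \<in> {1..l}"
      have "\<bar>- fst b j + fst v j\<bar> \<le> \<bar>fst b j\<bar> + \<bar>fst v j\<bar>" by arith
      thus "\<bar>fst (padd (pneg b) v) j\<bar> + int (Zr j) \<le> int (D j)"
        using bj[OF j] vm(2)[OF j] goodn(4,9,17)[OF gd j] goodD[OF gd j] unfolding fst_padd fst_pneg by linarith
    qed
  qed
  obtain z1 where z1: "z1 \<in> Zs" "act (inv\<^bsub>G\<^esub> \<phi> b) (act (\<phi> v) x) = act (\<phi> (padd (padd (pneg b) v) z1)) x"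
    "padd (padd (pneg b) v) z1 \<in> dm"
    using ax3[OF xx bdm vdm ptu] by blast
  define u where "u = padd (padd (pneg b) v) z1"
  have udm: "u \<in> dm" using z1(3) unfolding u_def .
  have "act (inv\<^bsub>G\<^esub> \<phi> b) (act (\<phi> v) x) = z" using yv[symmetric] yb act_inv_l[OF zX phi_car[OF bdm]] by simp
  hence zu: "z = act (\<phi> u) x" using z1(2) unfolding u_def by simp
  have xu: "act (inv\<^bsub>G\<^esub> \<phi> u) z = x" using zu act_inv_l[OF xX phi_car[OF udm]] by simp
  have z1c: "valid_pt l z1" "\<And>j. j \<in> {1..l} \<Longrightarrow> \<bar>fst z1 j\<bar> \<le> int (Zr j)" using z1(1) by (auto simp: mem_rset_c)
  define K where "K j = Linv \<delta> B j - sv j - 2 * int (Zr j)" for j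
  define t where "t j = fst b j - fst B j" for j
  define p where "p j = max (- K j) (min (K j) (t j))" for j
  define T where "T j = fst v j + p j - t j" for j
  define k where "k j = T j div sv j" for j
  define g where "g = gpt k"
  have gc: "fst g j = sv j * k j" if "j \<in> {1..l}" for j unfolding g_def gpt_def using that by simp
  have facts: "fst g j \<le> T j \<and> \<bar>fst g j - T j\<bar> \<le> sv j - 1 \<and> \<bar>p j\<bar> \<le> K j \<and>
      \<bar>fst g j\<bar> \<le> int PP * int (a j) + int (a j)" if j: "j \<in> {1..l}" for j
  proof -
    have s1: "1 \<le> sv j" using goodn(5)[OF gd j] .
    have K0: "0 \<le> K j" unfolding K_def using goodn(6)[OF gd j] by simp
    have KL: "K j \<le> Loutv \<delta> B j" unfolding K_def using goodn(10)[OF gd j] s1 by simp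
    have dm: "T j = sv j * k j + T j mod sv j" unfolding k_def by simp
    have md: "0 \<le> T j mod sv j" "T j mod sv j < sv j" using s1 by simp_all
    have gT: "fst g j \<le> T j" "T j - fst g j < sv j" using gc[OF j] dm md by linarith+
    note G = gTb[OF gT]
    have tb: "\<bar>t j\<bar> \<le> Loutv \<delta> B j" using bm(2)[OF j] unfolding t_def .
    note C = clamp[OF K0 tb KL]
    have pK: "\<bar>p j\<bar> \<le> K j" unfolding p_def using C by blast
    have pt: "\<bar>p j - t j\<bar> \<le> Loutv \<delta> B j - K j" unfolding p_def using C by blast
    have "T j = fst v j + (p j - t j)" unfolding T_def by simp
    hence "\<bar>T j\<bar> \<le> \<bar>fst v j\<bar> + \<bar>p j - t j\<bar>" using abs_triangle_ineq by metis
    hence "\<bar>fst g j\<bar> \<le> \<bar>fst v j\<bar> + (Loutv \<delta> B j - K j) + sv j" using G pt by linarith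
    hence "\<bar>fst g j\<bar> \<le> int PP * int (a j) + int (a j)"
      using vm(2)[OF j] goodn(7)[OF gd j] unfolding K_def by linarith
    thus ?thesis using G gT pK by blast
  qed
  have kb: "\<bar>k j\<bar> \<le> 5 * (int PP + 1)" if j: "j \<in> {1..l}" for j
  proof -
    have s1: "1 \<le> sv j" using goodn(5)[OF gd j] .
    have "sv j * \<bar>k j\<bar> = \<bar>fst g j\<bar>" using gc[OF j] s1 by (simp add: abs_mult)
    also have "\<dots> \<le> (int PP + 1) * int (a j)" using facts[OF j] by (simp add: algebra_simps)
    also have "\<dots> \<le> (int PP + 1) * (5 * sv j)" using goodn(8)[OF gd j] by (intro mult_left_mono) auto
    also have "\<dots> = sv j * (5 * (int PP + 1))" by (simp add: algebra_simps)
    finally show ?thesis using s1 by (meson mult_le_cancel_left_pos zero_less_one order_less_le_trans)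
  qed
  have gv: "valid_pt l g" unfolding g_def by (rule gpt_valid)
  have gdm: "g \<in> dm"
  proof -
    have "\<bar>fst g j\<bar> \<le> int (D j)" if "j \<in> {1..l}" for j
      using facts[OF that] goodD[OF gd that] goodn(17,18)[OF gd that] by linarith
    thus ?thesis using gv by (simp add: mem_rset_c)
  qed
  have uv: "valid_pt l u" unfolding u_def using bm(1) vm(1) z1c(1) by simp
  have ptg: "ptrans (pminus g u) Zs \<subseteq> dm"
  proof (rule ptrans_sub)
    show "valid_pt l (pminus g u)" using gv uv by simp
    show "\<forall>j\<in>{1..l}. \<bar>fst (pminus g u) j\<bar> + int (Zr j) \<le> int (D j)"
    proof
      fix j assume j: "j \<in> {1..l}"
      have "fst (pminus g u) j = fst g j + fst b j - fst v j - fst z1 j" unfolding u_def by simp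
      hence "\<bar>fst (pminus g u) j\<bar> \<le> \<bar>fst g j\<bar> + \<bar>fst b j\<bar> + \<bar>fst v j\<bar> + \<bar>fst z1 j\<bar>"
        using tri4b by metis
      thus "\<bar>fst (pminus g u) j\<bar> + int (Zr j) \<le> int (D j)"
        using facts[OF j] bj[OF j] vm(2)[OF j] z1c(2)[OF j] goodn(4,9,17)[OF gd j] goodD[OF gd j] by linarith
    qed
  qed
  obtain z3 where z3: "z3 \<in> Zs" "act (\<phi> g) (act (inv\<^bsub>G\<^esub> \<phi> u) z) = act (\<phi> (padd (pminus g u) z3)) z"
    "padd (pminus g u) z3 \<in> dm"
    using ax2[OF zx gdm udm ptg] by blast
  have z3c: "valid_pt l z3" "\<And>j. j \<in> {1..l} \<Longrightarrow> \<bar>fst z3 j\<bar> \<le> int (Zr j)" using z3(1) by (auto simp: mem_rset_c)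
  have "padd (pminus g u) z3 \<in> rset l (rscale (1-\<delta>) B)"
  proof -
    have "\<bar>fst g j - fst u j + fst z3 j - fst B j\<bar> \<le> Linv \<delta> B j" if j: "j \<in> {1..l}" for j
    proof -
      have e: "fst g j - fst u j + fst z3 j - fst B j = (fst g j - T j) + p j - fst z1 j + fst z3 j"
        unfolding u_def T_def t_def by simp
      have "\<bar>(fst g j - T j) + p j - fst z1 j + fst z3 j\<bar> \<le> \<bar>fst g j - T j\<bar> + \<bar>p j\<bar> + \<bar>fst z1 j\<bar> + \<bar>fst z3 j\<bar>"
        by (rule tri4)
      thus ?thesis unfolding e using facts[OF j] z1c(2)[OF j] z3c(2)[OF j] unfolding K_def by linarith
    qed
    thus ?thesis using r gv uv z3c(1) by (simp add: mem_rset)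
  qed
  hence "act (\<phi> g) x \<in> act_img act \<phi> (rset l (rscale (1-\<delta>) B)) z"
    using z3(2) xu unfolding act_img_def by auto
  hence "act (\<phi> g) x \<in> U" using inn by blast
  thus ?thesis using kb unfolding g_def by blast
qed

end

lemma count_bound:
  assumes "l \<ge> (1::nat)"
  shows "nat (2 * (5 * (int (2 ^ (17 * l)) + 1)) + 1) ^ l * 2 \<le> (2::nat) ^ (22 * l^2)"
proof -
  define P :: nat where "P = 2 ^ (17 * l)"
  have P1: "P \<ge> 2" unfolding P_def using power_increasing[of 1 "17 * l" "2::nat"] assms by simp
  have "nat (2 * (5 * (int P + 1)) + 1) = 10 * P + 11" by simp
  also have "\<dots> \<le> 16 * P" using P1 by simp
  also have "\<dots> = 2 ^ (17 * l + 4)" unfolding P_def by (simp add: power_add)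
  finally have b: "nat (2 * (5 * (int P + 1)) + 1) \<le> 2 ^ (17 * l + 4)" .
  have "nat (2 * (5 * (int P + 1)) + 1) ^ l * 2 \<le> (2 ^ (17 * l + 4)) ^ l * 2"
    using b by (intro mult_right_mono power_mono) auto
  also have "\<dots> = 2 ^ ((17 * l + 4) * l + 1)" by (simp only: power_add power_mult power_one_right)
  also have "\<dots> \<le> 2 ^ (22 * l^2)"
  proof (rule power_increasing)
    have "l * l \<ge> l" using assms by simp
    hence "4 * l + 1 \<le> 5 * (l * l)" using assms by linarith
    thus "(17 * l + 4) * l + 1 \<le> 22 * l\<^sup>2" by (simp add: power2_eq_square algebra_simps)
  qed simp
  finally show ?thesis unfolding P_def .
qed

context ctx2 begin

lemma good_of:
  assumes "\<delta> > 0" "is_rect l B" "roughly G act X l \<phi> D Zr HH \<delta> B z U" "rle l (centered a) B"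
    "(rset l (rscale (2 ^ (22 * l)) B) :: 'c pt set) \<subseteq> dm" "rle l (rscale (2 * \<delta>) B) (rscale \<epsilon> (centered a))"
  shows "goodc \<delta> B"
proof -
  have r: "\<delta> < 1" "rle l (rscale 2 (centered Zr)) (rscale \<delta> B)" using assms(3) unfolding roughly_def by auto
  have "\<bar>fst B j\<bar> + int (2 ^ (22 * l) * snd B j) \<le> int (D j)" if "j \<in> {1..l}" for j
    using rset_sub_bound[OF _ assms(5) that] assms(2) by (simp add: nn2)
  thus ?thesis using assms r unfolding goodc_def rle_def by auto
qed

end

context ctx2 begin

lemma pzero_rset: "is_rect l R \<Longrightarrow> fst R = (\<lambda>j. 0) \<Longrightarrow> (pzero :: 'c pt) \<in> rset l R"
  by (simp add: mem_rset pzero_def valid_pt_def)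

lemma main:
  fixes t :: nat and y :: "nat \<Rightarrow> 'x" and x :: 'x and E :: "'x rel"
  assumes eqE: "equiv X E" and sub: "sub_rectangular G act X l \<phi> D Zr HH a \<epsilon> E"
    and xx: "x \<in> XH G act X HH"
    and ys: "\<forall>r\<in>{1..t}. y r \<in> boundary G act X l \<phi> HH E (rscale q (centered a)) i
                    \<inter> act_img act \<phi> (rset l (rscale (2 ^ (17 * l)) (centered a))) x"
    and dj: "\<forall>r\<in>{1..t}. \<forall>s\<in>{1..t}. r \<noteq> s \<longrightarrow>
           act_img act \<phi> (psum (rset l (rscale (2 ^ (19 * l)) (rdrop i (centered a))))
                                 (rset l (rscale (5 * q) (centered a)))) (y r)
         \<inter> act_img act \<phi> (psum (rset l (rscale (2 ^ (19 * l)) (rdrop i (centered a))))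
                                 (rset l (rscale (5 * q) (centered a)))) (y s) = {}"
  shows "t \<le> 2 ^ (22 * l^2)"
proof -
  obtain F where FE: "F \<subseteq> E" and rect: "rectangular G act X l \<phi> D Zr HH a \<epsilon> F"
    using sub unfolding sub_rectangular_def by blast
  define RP where "RP U \<delta> B z \<longleftrightarrow> \<delta> > 0 \<and> is_rect l B \<and> z \<in> XH G act X HH \<and>
           roughly G act X l \<phi> D Zr HH \<delta> B z U \<and>
           rle l (centered a) B \<and>
           (rset l (rscale (2 ^ (22 * l)) B) :: 'c pt set) \<subseteq> dm \<and>
           rle l (rscale (2 * \<delta>) B) (rscale \<epsilon> (centered a))" for U \<delta> B z
  have eqF: "equiv X F" using rect unfolding rectangular_def by blast
  have clsF: "\<And>U. U \<in> X // F \<Longrightarrow> U \<inter> XH G act X HH \<noteq> {} \<Longrightarrow> \<exists>\<delta> B z. RP U \<delta> B z"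
    using rect unfolding rectangular_def RP_def by blast
  define dat where "dat U = (SOME p. RP U (fst p) (fst (snd p)) (snd (snd p)))" for U
  have datP: "RP U (fst (dat U)) (fst (snd (dat U))) (snd (snd (dat U)))"
    if U1: "U \<in> X // F" "U \<inter> XH G act X HH \<noteq> {}" for U
  proof -
    obtain \<delta> B z where "RP U \<delta> B z" using clsF[OF U1] by blast
    hence "\<exists>p. RP U (fst p) (fst (snd p)) (snd (snd p))" by (intro exI[of _ "(\<delta>, B, z)"]) simp
    thus ?thesis unfolding dat_def by (rule someI_ex)
  qed
  define Ur where "Ur r = F `` {y r}" for r
  define dl where "dl r = fst (dat (Ur r))" for r
  define Bc where "Bc r = fst (snd (dat (Ur r)))" for r
  define zc where "zc r = snd (snd (dat (Ur r)))" for r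
  define bb where "bb r = (SOME b. b \<in> rset l (rscale (1 + dl r) (Bc r)) \<and> y r = act (\<phi> b) (zc r))" for r
  define vv where "vv r = (SOME v. v \<in> (rset l (rscale (2 ^ (17 * l)) (centered a)) :: 'c pt set) \<and> y r = act (\<phi> v) x)" for r
  define NN where "NN = 5 * (int PP + 1)"
  define kk where "kk r = (SOME k. (\<forall>j\<in>{1..l}. \<bar>k j\<bar> \<le> NN) \<and> act (\<phi> (gpt k)) x \<in> Ur r)" for r
  have R: "y r \<in> XH G act X HH \<and> goodc (dl r) (Bc r) \<and> zc r \<in> XH G act X HH \<and>
      bb r \<in> rset l (rscale (1 + dl r) (Bc r)) \<and> y r = act (\<phi> (bb r)) (zc r) \<and>
      vv r \<in> (rset l (rscale (2 ^ (17 * l)) (centered a)) :: 'c pt set) \<and> y r = act (\<phi> (vv r)) x \<and>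
      \<bar>fst (bb r) i - fst (Bc r) i\<bar> > Linv (dl r) (Bc r) i - Qv i - int (Zr i) \<and>
      (\<forall>j\<in>{1..l}. \<bar>kk r j\<bar> \<le> NN) \<and> act (\<phi> (gpt (kk r))) x \<in> Ur r \<and> Ur r \<in> X // F"
    if r: "r \<in> {1..t}" for r
  proof -
    have yb: "y r \<in> boundary G act X l \<phi> HH E (rscale q (centered a)) i" using ys r by blast
    have yXH: "y r \<in> XH G act X HH" using yb unfolding boundary_def by blast
    have yX: "y r \<in> X" using XHD[OF yXH] by blast
    have "y r \<in> act_img act \<phi> (rset l (rscale (2 ^ (17 * l)) (centered a))) x" using ys r by blast
    hence "\<exists>v. v \<in> (rset l (rscale (2 ^ (17 * l)) (centered a)) :: 'c pt set) \<and> y r = act (\<phi> v) x"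
      unfolding act_img_def by blast
    hence vP: "vv r \<in> (rset l (rscale (2 ^ (17 * l)) (centered a)) :: 'c pt set) \<and> y r = act (\<phi> (vv r)) x"
      unfolding vv_def by (rule someI_ex)
    have UQ: "Ur r \<in> X // F" unfolding Ur_def using yX by (rule quotientI)
    have yU: "y r \<in> Ur r" unfolding Ur_def using eqF yX unfolding equiv_def refl_on_def by blast
    have P: "RP (Ur r) (dl r) (Bc r) (zc r)" unfolding dl_def Bc_def zc_def
      using datP[OF UQ] yU yXH by blast
    have gd: "goodc (dl r) (Bc r)" using P unfolding RP_def by (intro good_of) auto
    have zXH: "zc r \<in> XH G act X HH" using P unfolding RP_def by blast
    have inn: "act_img act \<phi> (rset l (rscale (1 - dl r) (Bc r))) (zc r) \<subseteq> Ur r"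
      and out: "Ur r \<subseteq> act_img act \<phi> (rset l (rscale (1 + dl r) (Bc r))) (zc r)"
      using P unfolding RP_def roughly_def by blast+
    have "\<exists>b. b \<in> rset l (rscale (1 + dl r) (Bc r)) \<and> y r = act (\<phi> b) (zc r)"
      using out yU unfolding act_img_def by blast
    hence bP: "bb r \<in> rset l (rscale (1 + dl r) (Bc r)) \<and> y r = act (\<phi> (bb r)) (zc r)"
      unfolding bb_def by (rule someI_ex)
    have UE: "\<forall>u\<in>Ur r. \<forall>u'\<in>Ur r. (u, u') \<in> E"
    proof (intro ballI)
      fix u u' assume "u \<in> Ur r" "u' \<in> Ur r"
      hence "(y r, u) \<in> F" "(y r, u') \<in> F" unfolding Ur_def by auto
      hence "(u, u') \<in> F" using eqF unfolding equiv_def sym_def trans_def by blast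
      thus "(u, u') \<in> E" using FE by blast
    qed
    have sd: "\<bar>fst (bb r) i - fst (Bc r) i\<bar> > Linv (dl r) (Bc r) i - Qv i - int (Zr i)"
      using side[OF gd yb zXH _ _ inn UE] bP by blast
    have "\<exists>k. (\<forall>j\<in>{1..l}. \<bar>k j\<bar> \<le> NN) \<and> act (\<phi> (gpt k)) x \<in> Ur r"
      using grid[OF gd zXH xx _ _ _ _ inn] bP vP unfolding NN_def by blast
    hence kP: "(\<forall>j\<in>{1..l}. \<bar>kk r j\<bar> \<le> NN) \<and> act (\<phi> (gpt (kk r))) x \<in> Ur r"
      unfolding kk_def by (rule someI_ex)
    show ?thesis using yXH gd zXH bP vP sd kP UQ by blast
  qed
  define f where "f r = (restrict (kk r) {1..l}, fst (bb r) i - fst (Bc r) i > 0)" for r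
  define Cod where "Cod = (PiE {1..l} (\<lambda>_. {-NN..NN})) \<times> (UNIV :: bool set)"
  have fC: "f ` {1..t} \<subseteq> Cod"
  proof
    fix p assume "p \<in> f ` {1..t}"
    then obtain r where r: "r \<in> {1..t}" "p = f r" by blast
    have "\<forall>j\<in>{1..l}. \<bar>kk r j\<bar> \<le> NN" using R[OF r(1)] by blast
    hence "\<forall>j\<in>{1..l}. kk r j \<in> {-NN..NN}" by (auto simp: abs_le_iff)
    thus "p \<in> Cod" unfolding r(2) f_def Cod_def by (simp add: restrict_PiE_iff)
  qed
  have finC: "finite Cod" unfolding Cod_def by (intro finite_cartesian_product finite_PiE) auto
  have inj: "inj_on f {1..t}"
  proof (rule inj_onI, rule ccontr)
    fix r s assume r: "r \<in> {1..t}" and s: "s \<in> {1..t}" and fe: "f r = f s" and ne: "r \<noteq> s"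
    have kr: "restrict (kk r) {1..l} = restrict (kk s) {1..l}" and sg: "(fst (bb r) i - fst (Bc r) i > 0) = (fst (bb s) i - fst (Bc s) i > 0)"
      using fe unfolding f_def by auto
    have kj: "kk r j = kk s j" if "j \<in> {1..l}" for j using kr that by (metis restrict_apply')
    have "gpt (kk r) = gpt (kk s)" using kj by (auto simp: gpt_def fun_eq_iff)
    hence "act (\<phi> (gpt (kk r))) x \<in> Ur r \<inter> Ur s" using R[OF r] R[OF s] by auto
    hence UU: "Ur r = Ur s" using quotient_disj[OF eqF] R[OF r] R[OF s] by blast
    hence same: "dl r = dl s" "Bc r = Bc s" "zc r = zc s" unfolding dl_def Bc_def zc_def by auto
    have "y s \<in> act_img act \<phi> (psum (rset l (rscale (2 ^ (19 * l)) (rdrop i (centered a))))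
                                 (rset l (rscale (5 * q) (centered a)))) (y r)"
    proof -
      note Rr = R[OF r] and Rs = R[OF s]
      have a1: "goodc (dl r) (Bc r)" "zc r \<in> XH G act X HH" "y r \<in> XH G act X HH"
        "bb r \<in> rset l (rscale (1 + dl r) (Bc r))" "y r = act (\<phi> (bb r)) (zc r)"
        "vv r \<in> (rset l (rscale (2 ^ (17 * l)) (centered a)) :: 'c pt set)" "y r = act (\<phi> (vv r)) x"
        "\<bar>fst (bb r) i - fst (Bc r) i\<bar> > Linv (dl r) (Bc r) i - Qv i - int (Zr i)"
        using Rr by blast+
      have a2: "bb s \<in> rset l (rscale (1 + dl r) (Bc r))" "y s = act (\<phi> (bb s)) (zc r)"
        "vv s \<in> (rset l (rscale (2 ^ (17 * l)) (centered a)) :: 'c pt set)" "y s = act (\<phi> (vv s)) x"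
        "\<bar>fst (bb s) i - fst (Bc r) i\<bar> > Linv (dl r) (Bc r) i - Qv i - int (Zr i)"
        using Rs unfolding same by blast+
      have sg': "(fst (bb r) i - fst (Bc r) i > 0) = (fst (bb s) i - fst (Bc r) i > 0)"
        using sg unfolding same .
      show ?thesis by (rule pair[OF a1(1,2) xx a1(3,4,5,6,7) a2(1,2,3,4) a1(8) a2(5) sg'])
    qed
    moreover have "y s \<in> act_img act \<phi> (psum (rset l (rscale (2 ^ (19 * l)) (rdrop i (centered a))))
                                 (rset l (rscale (5 * q) (centered a)))) (y s)"
    proof -
      have "pzero \<in> psum (rset l (rscale (2 ^ (19 * l)) (rdrop i (centered a))))
                                 (rset l (rscale (5 * q) (centered a)) :: 'c pt set)"
        unfolding psum_def using pzero_rset[of "rscale (2 ^ (19 * l)) (rdrop i (centered a))"]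
          pzero_rset[of "rscale (5 * q) (centered a)"]
        by (intro CollectI exI[of _ pzero]) (simp add: padd_def pzero_def)
      moreover have "act (\<phi> pzero) (y s) = y s"
      proof -
        have "y s \<in> X" using XHD R[OF s] by blast
        thus ?thesis using chartD(2) act_one by simp
      qed
      ultimately show ?thesis unfolding act_img_def by force
    qed
    ultimately show False using dj r s ne by blast
  qed
  have "t = card {1..t}" by simp
  also have "\<dots> \<le> card Cod" by (rule card_inj_on_le[OF inj fC finC])
  also have "card Cod = nat (2 * NN + 1) ^ l * 2"
    unfolding Cod_def by (simp add: card_cartesian_product card_PiE)
  also have "\<dots> \<le> 2 ^ (22 * l^2)" unfolding NN_def using count_bound[OF l1] .
  finally show ?thesis .
qed

end

theorem lemma6p5:
  fixes G :: "('g, 'b) monoid_scheme" and act :: "'g \<Rightarrow> 'x \<Rightarrow> 'x" and X :: "'x set"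
    and l :: nat and \<phi> :: "'c::{finite, ab_group_add} pt \<Rightarrow> 'g"
    and D Zr a :: "nat \<Rightarrow> nat" and \<H> :: "'g set set"
    and \<epsilon> q :: real and E :: "'x rel" and x :: 'x and i t :: nat and y :: "nat \<Rightarrow> 'x"
  assumes "group G" and "countable (carrier G)" and "group_action G X act"
    and "chart G l \<phi> D Zr \<H>"
    and "0 < \<epsilon>" and "\<epsilon> < 1/16" and "6 * \<epsilon> < q" and "q < 1/2"
    and "equiv X E"
    and "sub_rectangular G act X l \<phi> D Zr \<H> a \<epsilon> E"
    and "x \<in> XH G act X \<H>" and "i \<in> {1..l}"
    and "\<forall>r\<in>{1..t}. y r \<in> boundary G act X l \<phi> \<H> E (rscale q (centered a)) i
                    \<inter> act_img act \<phi> (rset l (rscale (2 ^ (17 * l)) (centered a))) x"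
    and "\<forall>r\<in>{1..t}. \<forall>s\<in>{1..t}. r \<noteq> s \<longrightarrow>
           act_img act \<phi> (psum (rset l (rscale (2 ^ (19 * l)) (rdrop i (centered a))))
                                 (rset l (rscale (5 * q) (centered a)))) (y r)
         \<inter> act_img act \<phi> (psum (rset l (rscale (2 ^ (19 * l)) (rdrop i (centered a))))
                                 (rset l (rscale (5 * q) (centered a)))) (y s) = {}"
  shows "t \<le> 2 ^ (22 * l^2)"
proof -
  have c: "ctx G act X l \<phi> D Zr \<H>" by (rule ctx.intro[OF assms(3,4)])
  have c2: "ctx2 G act X l \<phi> D Zr \<H> \<epsilon> q i"
    unfolding ctx2_def ctx2_axioms_def using c assms(5,6,7,8,12) by blast
  interpret ctx2 G act X l \<phi> D Zr \<H> a \<epsilon> q i by (rule c2)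
  show ?thesis by (rule main[OF assms(9,10,11,13,14)])
qed

end
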